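(* Let $\omega\colon\mathbf Z_+\to(0,+\infty)$ be a weight which is bounded from below, such that $\sum_{n\ge0}1/\omega(k2^n)<+\infty$ for every $k\ge3$, and such that $\mathcal T$ is bounded on $\mathcal X_\omega$. Then $\mathcal T$ is frequently hypercyclic on $\mathcal X_\omega$: there exists $f\in\mathcal X_\omega$ such that for every nonempty open set $U\subset\mathcal X_\omega$, $\liminf_{N\to\infty}\frac{\#\{0\le n\le N:\ \mathcal T^nf\in U\}}{N+1}>0$. In particular this holds for $\omega=\omega_0$, $\omega_0(n)=(n+1)/\pi$.
   Context: $T\colon\mathbf Z_+\to\mathbf Z_+$ is the modified Collatz map: $T(n)=n/2$ for $n$ even, $T(n)=(3n+1)/2$ for $n$ odd. $\mathcal X_\omega$ is the Hilbert space of holomorphic functions $f(z)=\sum_{n\ge3}c_nz^n$ on the unit disk with $\|f\|_\omega^2=\sum_{n\ge3}|c_n|^2/\omega(n)<\infty$. $\mathcal T\sum_{n\ge3}c_nz^n=\sum_{j\ge3,\,T(j)\ge3}c_jz^{T(j)}$. $\mathcal T$ is bounded on $\mathcal X_\omega$ iff the sequences $\omega(6m)/\omega(3m)$, $\omega(6m+2)/\omega(3m+1)$, $(\omega(6m+4)+\omega(2m+1))/\omega(3m+2)$ ($m\ge1$) are bounded; this holds for $\omega_0$. *)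

theory Defs
  imports "HOL-Complex_Analysis.Complex_Analysis"
begin

definition collatz :: "nat \<Rightarrow> nat" where
  "collatz n = (if even n then n div 2 else (3 * n + 1) div 2)"

definition coef :: "(complex \<Rightarrow> complex) \<Rightarrow> nat \<Rightarrow> complex" where
  "coef f n = (deriv ^^ n) f 0 / of_nat (fact n)"

definition inX :: "(nat \<Rightarrow> real) \<Rightarrow> (complex \<Rightarrow> complex) \<Rightarrow> bool" where
  "inX \<omega> f \<longleftrightarrow> f holomorphic_on ball 0 1 \<and> (\<forall>n<3. coef f n = 0) \<and>
      summable (\<lambda>n. (cmod (coef f n))\<^sup>2 / \<omega> n)"

definition normX :: "(nat \<Rightarrow> real) \<Rightarrow> (complex \<Rightarrow> complex) \<Rightarrow> real" where
  "normX \<omega> f = sqrt (\<Sum>n. (cmod (coef f n))\<^sup>2 / \<omega> n)"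

definition openX :: "(nat \<Rightarrow> real) \<Rightarrow> (complex \<Rightarrow> complex) set \<Rightarrow> bool" where
  "openX \<omega> U \<longleftrightarrow> (\<forall>u\<in>U. inX \<omega> u) \<and>
     (\<forall>u\<in>U. \<exists>e>0. \<forall>g. inX \<omega> g \<and> normX \<omega> (\<lambda>z. g z - u z) < e \<longrightarrow> g \<in> U)"

text \<open>Coefficients of the image under the Collatz operator:
  (T f) = sum_{j>=3, T(j)>=3} c_j z^{T(j)}.\<close>
definition Tcoef :: "(nat \<Rightarrow> complex) \<Rightarrow> nat \<Rightarrow> complex" where
  "Tcoef c m = (if m < 3 then 0 else (\<Sum>j\<in>{j. 3 \<le> j \<and> collatz j = m}. c j))"

definition Top :: "(complex \<Rightarrow> complex) \<Rightarrow> (complex \<Rightarrow> complex)" where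
  "Top f = (\<lambda>z. \<Sum>m. Tcoef (coef f) m * z ^ m)"

definition Top_bounded :: "(nat \<Rightarrow> real) \<Rightarrow> bool" where
  "Top_bounded \<omega> \<longleftrightarrow> (\<exists>C. \<forall>f. inX \<omega> f \<longrightarrow> inX \<omega> (Top f) \<and> normX \<omega> (Top f) \<le> C * normX \<omega> f)"

definition freq_hypercyclic :: "(nat \<Rightarrow> real) \<Rightarrow> bool" where
  "freq_hypercyclic \<omega> \<longleftrightarrow> (\<exists>f. inX \<omega> f \<and>
     (\<forall>U. openX \<omega> U \<and> U \<noteq> {} \<longrightarrow>
        Liminf sequentially (\<lambda>N. ereal (real (card {n. n \<le> N \<and> (Top ^^ n) f \<in> U}) / real (N + 1))) > 0))"

definition \<omega>0 :: "nat \<Rightarrow> real" where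
  "\<omega>0 n = (real n + 1) / pi"

end

theory Submission
  imports Defs "HOL-Library.Countable" "HOL-Real_Asymp.Real_Asymp"
begin


abbreviation Tn :: "nat \<Rightarrow> (nat \<Rightarrow> complex) \<Rightarrow> nat \<Rightarrow> complex" where "Tn p \<equiv> Tcoef ^^ p"

definition P1 :: "nat \<Rightarrow> nat set" where "P1 m = {j. 3 \<le> j \<and> collatz j = m}"

lemma P1_sub: "P1 m \<subseteq> {2*m, (2*m - 1) div 3}"
proof
  fix j assume "j \<in> P1 m"
  hence j: "3 \<le> j" "collatz j = m" by (auto simp: P1_def)
  show "j \<in> {2*m, (2*m - 1) div 3}"
  proof (cases "even j")
    case True thus ?thesis using j by (auto simp: collatz_def)
  next
    case False
    hence "3*j+1 = 2*m" using j by (auto simp: collatz_def)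
    thus ?thesis by auto
  qed
qed

lemma P1_finite: "finite (P1 m)" using P1_sub finite_subset by blast

lemma P1_le: "j \<in> P1 m \<Longrightarrow> j \<le> 2*m" using P1_sub by fastforce

lemma two_m_P1: "3 \<le> m \<Longrightarrow> 2*m \<in> P1 m" by (auto simp: P1_def collatz_def)

lemma Tcoef_P1: "Tcoef c m = (if m < 3 then 0 else sum c (P1 m))"
  by (simp add: Tcoef_def P1_def)

fun Pre :: "nat \<Rightarrow> nat \<Rightarrow> nat set" where
  "Pre 0 m = {m}"
| "Pre (Suc p) m = (if m < 3 then {} else \<Union>j\<in>P1 m. Pre p j)"

lemma Pre_finite: "finite (Pre p m)"
  by (induction p arbitrary: m) (auto simp: P1_finite)

lemma Pre_collatz: "i \<in> Pre p m \<Longrightarrow> (collatz ^^ p) i = m"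
  by (induction p arbitrary: m) (auto simp: P1_def split: if_splits)

lemma Pre_le: "i \<in> Pre p m \<Longrightarrow> i \<le> 2^p * m"
proof (induction p arbitrary: m)
  case 0 thus ?case by simp
next
  case (Suc p)
  then obtain j where j: "j \<in> P1 m" "i \<in> Pre p j" by (auto split: if_splits)
  have "i \<le> 2^p * j" using Suc.IH j by blast
  also have "\<dots> \<le> 2^p * (2*m)" using P1_le[OF j(1)] by simp
  finally show ?case by simp
qed

lemma Tn_Pre: "Tn p c m = (\<Sum>i\<in>Pre p m. c i)"
proof (induction p arbitrary: m)
  case 0 thus ?case by simp
next
  case (Suc p)
  show ?case
  proof (cases "m < 3")
    case True thus ?thesis by (simp add: Tcoef_P1)
  next
    case False
    have "Tn (Suc p) c m = (\<Sum>j\<in>P1 m. Tn p c j)" using False by (simp add: Tcoef_P1)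
    also have "\<dots> = (\<Sum>j\<in>P1 m. \<Sum>i\<in>Pre p j. c i)" using Suc.IH by simp
    also have "\<dots> = sum c (\<Union>j\<in>P1 m. Pre p j)"
      by (rule sum.UNION_disjoint[symmetric]) (auto simp: P1_finite Pre_finite dest: Pre_collatz)
    finally show ?thesis using False by simp
  qed
qed

lemma Tn_sum: "Tn p (\<lambda>i. \<Sum>n\<in>F. v n i) m = (\<Sum>n\<in>F. Tn p (v n) m)"
  by (simp add: Tn_Pre sum.swap[of _ F])

lemma Tn_diff: "Tn p (\<lambda>i. c i - d i) m = Tn p c m - Tn p d m"
  by (simp add: Tn_Pre sum_subtractf)

lemma Tn_scale: "Tn p (\<lambda>i. a * c i) m = a * Tn p c m"
  by (simp add: Tn_Pre sum_distrib_left)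

lemma Tn_zero: "Tn p (\<lambda>i. 0) m = 0"
  by (simp add: Tn_Pre)

lemma Tn_zero': "Tn p (\<lambda>i. 0) = (\<lambda>i. 0)"
  using Tn_zero by blast

lemma Tn_add: "Tn (a+b) c = Tn a (Tn b c)"
  by (simp add: funpow_add)

definition sh :: "nat \<Rightarrow> (nat \<Rightarrow> complex) \<Rightarrow> nat \<Rightarrow> complex" where
  "sh n y i = (if 2^n dvd i then y (i div 2^n) else 0)"

definition supp3 :: "(nat \<Rightarrow> complex) \<Rightarrow> bool" where
  "supp3 y \<longleftrightarrow> (\<forall>i<3. y i = 0)"

lemma sh0[simp]: "sh 0 y = y" by (auto simp: sh_def fun_eq_iff)

lemma sh_supp3: "supp3 y \<Longrightarrow> sh n y i \<noteq> 0 \<Longrightarrow> 3 * 2^n \<le> i"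
proof -
  assume y: "supp3 y" and ne: "sh n y i \<noteq> 0"
  then have d: "2^n dvd i" and "y (i div 2^n) \<noteq> 0" by (auto simp: sh_def split: if_splits)
  then have "3 \<le> i div 2^n" using y by (auto simp: supp3_def) (meson not_le)
  then have "3 * 2^n \<le> i div 2^n * 2^n" by simp
  also have "\<dots> = i" using d by simp
  finally show ?thesis .
qed

lemma sh_supp3_lt: "supp3 y \<Longrightarrow> sh n y i \<noteq> 0 \<Longrightarrow> n < i"
proof -
  assume a: "supp3 y" "sh n y i \<noteq> 0"
  have "n < 2^n" by (rule less_exp)
  also have "\<dots> \<le> 3 * 2^n" by simp
  also have "\<dots> \<le> i" using sh_supp3[OF a] .
  finally show ?thesis .
qed

lemma supp3_sh: "supp3 y \<Longrightarrow> supp3 (sh n y)"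
proof -
  assume y: "supp3 y"
  { fix i assume i: "i < 3" and ne: "sh n y i \<noteq> 0"
    have "3 * 2^n \<le> i" using sh_supp3[OF y ne] .
    moreover have "3 \<le> 3 * (2::nat)^n" by simp
    ultimately have False using i by linarith }
  thus ?thesis unfolding supp3_def by blast
qed

lemma Tcoef_sh_Suc: assumes y: "supp3 y" shows "Tcoef (sh (Suc n) y) = sh n y"
proof
  fix m
  show "Tcoef (sh (Suc n) y) m = sh n y m"
  proof (cases "m < 3")
    case True
    have "sh n y m = 0"
    proof (cases "2^n dvd m")
      case True
      have "m div 2^n \<le> m" by simp
      hence "m div 2^n < 3" using \<open>m<3\<close> by linarith
      thus ?thesis using y True by (simp add: sh_def supp3_def)
    qed (simp add: sh_def)
    thus ?thesis using True by (simp add: Tcoef_P1)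
  next
    case False
    have m2: "2*m \<in> P1 m" using False two_m_P1 by simp
    have z: "\<forall>j\<in>P1 m - {2*m}. sh (Suc n) y j = 0"
    proof
      fix j assume "j \<in> P1 m - {2*m}"
      hence "j = (2*m - 1) div 3" "j \<in> P1 m" using P1_sub by auto
      hence "odd j" by (auto simp: P1_def collatz_def)
      thus "sh (Suc n) y j = 0" by (auto simp: sh_def)
    qed
    have "Tcoef (sh (Suc n) y) m = sum (sh (Suc n) y) (P1 m)" using False by (simp add: Tcoef_P1)
    also have "\<dots> = sh (Suc n) y (2*m) + sum (sh (Suc n) y) (P1 m - {2*m})"
      using m2 P1_finite by (simp add: sum.remove)
    also have "\<dots> = sh (Suc n) y (2*m)" using z by simp
    also have "\<dots> = sh n y m" by (simp add: sh_def)
    finally show ?thesis .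
  qed
qed

lemma Tn_sh: assumes y: "supp3 y" shows "m \<le> n \<Longrightarrow> Tn m (sh n y) = sh (n-m) y"
proof (induction m)
  case 0 thus ?case by simp
next
  case (Suc m)
  then have "Tn (Suc m) (sh n y) = Tcoef (sh (Suc (n - Suc m)) y)" by (simp add: Suc_diff_Suc)
  also have "\<dots> = sh (n - Suc m) y" by (rule Tcoef_sh_Suc[OF y])
  finally show ?case .
qed

lemma Tn_sh_same: "supp3 y \<Longrightarrow> Tn n (sh n y) = y"
  using Tn_sh[of y n n] by simp

lemma Tn_sh_ge: assumes y: "supp3 y" and "n \<le> m" shows "Tn m (sh n y) = Tn (m-n) y"
proof -
  have "Tn m (sh n y) = Tn (m-n) (Tn n (sh n y))" using Tn_add[of "m-n" n] assms by simp
  thus ?thesis using Tn_sh_same[OF y] by simp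
qed


definition Lp :: "(nat \<Rightarrow> real) \<Rightarrow> (nat \<Rightarrow> complex) \<Rightarrow> nat set \<Rightarrow> real" where
  "Lp \<omega> c A = L2_set (\<lambda>i. cmod (c i) / sqrt (\<omega> i)) A"

definition wn :: "(nat \<Rightarrow> real) \<Rightarrow> (nat \<Rightarrow> complex) \<Rightarrow> real" where
  "wn \<omega> c = (\<Sum>n. (cmod (c n))\<^sup>2 / \<omega> n)"

definition wsum :: "(nat \<Rightarrow> real) \<Rightarrow> (nat \<Rightarrow> complex) \<Rightarrow> bool" where
  "wsum \<omega> c \<longleftrightarrow> summable (\<lambda>n. (cmod (c n))\<^sup>2 / \<omega> n)"

locale W =
  fixes \<omega> :: "nat \<Rightarrow> real"
  assumes pos: "\<And>n. 1 \<le> n \<Longrightarrow> 0 < \<omega> n"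
begin

lemma Lp_nonneg: "0 \<le> Lp \<omega> c A" by (simp add: Lp_def)

lemma Lp_mono_fun:
  assumes "A \<subseteq> {1..}" "\<And>i. i \<in> A \<Longrightarrow> cmod (c i) \<le> cmod (d i)"
  shows "Lp \<omega> c A \<le> Lp \<omega> d A"
  unfolding Lp_def
proof (rule L2_set_mono)
  fix i assume i: "i \<in> A"
  hence w: "0 < \<omega> i" using assms pos by auto
  show "cmod (c i) / sqrt (\<omega> i) \<le> cmod (d i) / sqrt (\<omega> i)"
    using assms(2)[OF i] w by (simp add: divide_right_mono)
  show "0 \<le> cmod (c i) / sqrt (\<omega> i)" using w by simp
qed

lemma Lp_add:
  assumes "A \<subseteq> {1..}"
  shows "Lp \<omega> (\<lambda>i. c i + d i) A \<le> Lp \<omega> c A + Lp \<omega> d A"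
proof -
  have "Lp \<omega> (\<lambda>i. c i + d i) A \<le> L2_set (\<lambda>i. cmod (c i) / sqrt (\<omega> i) + cmod (d i) / sqrt (\<omega> i)) A"
    unfolding Lp_def
  proof (rule L2_set_mono)
    fix i assume i: "i \<in> A"
    hence w: "0 < \<omega> i" using assms pos by auto
    have "cmod (c i + d i) / sqrt (\<omega> i) \<le> (cmod (c i) + cmod (d i)) / sqrt (\<omega> i)"
      using w by (simp add: divide_right_mono norm_triangle_ineq)
    thus "cmod (c i + d i) / sqrt (\<omega> i) \<le> cmod (c i) / sqrt (\<omega> i) + cmod (d i) / sqrt (\<omega> i)"
      by (simp add: add_divide_distrib)
    show "0 \<le> cmod (c i + d i) / sqrt (\<omega> i)" using w by simp
  qed
  also have "\<dots> \<le> Lp \<omega> c A + Lp \<omega> d A" unfolding Lp_def by (rule L2_set_triangle_ineq)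
  finally show ?thesis .
qed

lemma Lp_diff:
  assumes "A \<subseteq> {1..}"
  shows "Lp \<omega> (\<lambda>i. c i - d i) A \<le> Lp \<omega> c A + Lp \<omega> d A"
proof -
  have "Lp \<omega> (\<lambda>i. c i - d i) A = Lp \<omega> (\<lambda>i. c i + (- d i)) A" by simp
  also have "\<dots> \<le> Lp \<omega> c A + Lp \<omega> (\<lambda>i. - d i) A" by (rule Lp_add[OF assms])
  also have "Lp \<omega> (\<lambda>i. - d i) A = Lp \<omega> d A" by (simp add: Lp_def)
  finally show ?thesis .
qed

lemma Lp_commute: "Lp \<omega> (\<lambda>i. c i - d i) A = Lp \<omega> (\<lambda>i. d i - c i) A"
  by (simp add: Lp_def norm_minus_commute)

lemma Lp_tri:
  assumes "A \<subseteq> {1..}"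
  shows "Lp \<omega> (\<lambda>i. c i - d i) A \<le> Lp \<omega> (\<lambda>i. c i - e i) A + Lp \<omega> (\<lambda>i. e i - d i) A"
proof -
  have "Lp \<omega> (\<lambda>i. c i - d i) A = Lp \<omega> (\<lambda>i. (c i - e i) + (e i - d i)) A" by simp
  also have "\<dots> \<le> Lp \<omega> (\<lambda>i. c i - e i) A + Lp \<omega> (\<lambda>i. e i - d i) A" by (rule Lp_add[OF assms])
  finally show ?thesis .
qed

lemma Lp_sum:
  assumes "A \<subseteq> {1..}"
  shows "Lp \<omega> (\<lambda>i. \<Sum>n\<in>F. v n i) A \<le> (\<Sum>n\<in>F. Lp \<omega> (v n) A)"
proof (induction F rule: infinite_finite_induct)
  case (infinite F) thus ?case by (simp add: Lp_def L2_set_0')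
next
  case empty thus ?case by (simp add: Lp_def L2_set_0')
next
  case (insert x F)
  have "Lp \<omega> (\<lambda>i. \<Sum>n\<in>insert x F. v n i) A = Lp \<omega> (\<lambda>i. v x i + (\<Sum>n\<in>F. v n i)) A"
    using insert by simp
  also have "\<dots> \<le> Lp \<omega> (v x) A + Lp \<omega> (\<lambda>i. \<Sum>n\<in>F. v n i) A" by (rule Lp_add[OF assms])
  also have "\<dots> \<le> Lp \<omega> (v x) A + (\<Sum>n\<in>F. Lp \<omega> (v n) A)" using insert by simp
  finally show ?case using insert by simp
qed

lemma Lp_scale: "Lp \<omega> (\<lambda>i. a * c i) A = cmod a * Lp \<omega> (c) A"
  unfolding Lp_def by (subst L2_set_right_distrib) (auto simp: norm_mult)

lemma Lp_sq:
  assumes "A \<subseteq> {1..}"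
  shows "(Lp \<omega> c A)\<^sup>2 = (\<Sum>i\<in>A. (cmod (c i))\<^sup>2 / \<omega> i)"
proof -
  have "(Lp \<omega> c A)\<^sup>2 = (\<Sum>i\<in>A. (cmod (c i) / sqrt (\<omega> i))\<^sup>2)"
    unfolding Lp_def L2_set_def by (simp add: sum_nonneg)
  also have "\<dots> = (\<Sum>i\<in>A. (cmod (c i))\<^sup>2 / \<omega> i)"
  proof (rule sum.cong)
    fix i assume "i \<in> A" hence "0 < \<omega> i" using assms pos by auto
    thus "(cmod (c i) / sqrt (\<omega> i))\<^sup>2 = (cmod (c i))\<^sup>2 / \<omega> i" by (simp add: power_divide)
  qed simp
  finally show ?thesis .
qed

lemma Lp_subset:
  assumes "A \<subseteq> B" "finite B"
  shows "Lp \<omega> c A \<le> Lp \<omega> c B"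
  unfolding Lp_def L2_set_def
  by (rule real_sqrt_le_mono, rule sum_mono2) (use assms in auto)

lemma terms_nonneg: "c 0 = 0 \<Longrightarrow> 0 \<le> (cmod (c n))\<^sup>2 / \<omega> n"
  using pos[of n] by (cases n) auto

lemma wsum_from_Lp:
  assumes c0: "c 0 = 0" and B: "\<And>K. Lp \<omega> c {1..<K} \<le> B"
  shows "wsum \<omega> c" "sqrt (wn \<omega> c) \<le> B"
proof -
  have B0: "0 \<le> B" using B[of 0] Lp_nonneg order_trans by blast
  have ps: "(\<Sum>i<K. (cmod (c i))\<^sup>2 / \<omega> i) \<le> B\<^sup>2" for K
  proof -
    have "(\<Sum>i<K. (cmod (c i))\<^sup>2 / \<omega> i) = (\<Sum>i\<in>{1..<K}. (cmod (c i))\<^sup>2 / \<omega> i)"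
    proof (cases K)
      case (Suc K')
      have "{..<K} = insert 0 {1..<K}" using Suc by auto
      thus ?thesis using c0 by simp
    qed simp
    also have "\<dots> = (Lp \<omega> c {1..<K})\<^sup>2" by (rule Lp_sq[symmetric]) auto
    also have "\<dots> \<le> B\<^sup>2" using B[of K] Lp_nonneg by (simp add: power_mono)
    finally show ?thesis .
  qed
  have s: "summable (\<lambda>i. (cmod (c i))\<^sup>2 / \<omega> i)"
  proof (rule bounded_imp_summable)
    show "\<And>n. 0 \<le> (cmod (c n))\<^sup>2 / \<omega> n" using terms_nonneg[of c, OF c0] .
    fix n show "(\<Sum>k\<le>n. (cmod (c k))\<^sup>2 / \<omega> k) \<le> B\<^sup>2" using ps[of "Suc n"] by (simp add: lessThan_Suc_atMost)
  qed
  thus "wsum \<omega> c" by (simp add: wsum_def)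
  have "wn \<omega> c \<le> B\<^sup>2" unfolding wn_def by (rule suminf_le_const[OF s ps])
  thus "sqrt (wn \<omega> c) \<le> B" by (rule real_le_lsqrt[OF B0])
qed

lemma Lp_le_wn:
  assumes c0: "c 0 = 0" and s: "wsum \<omega> c" and A: "finite A" "A \<subseteq> {1..}"
  shows "Lp \<omega> c A \<le> sqrt (wn \<omega> c)"
proof -
  have "(Lp \<omega> c A)\<^sup>2 = (\<Sum>i\<in>A. (cmod (c i))\<^sup>2 / \<omega> i)" by (rule Lp_sq[OF A(2)])
  also have "\<dots> \<le> wn \<omega> c" unfolding wn_def
    by (rule sum_le_suminf) (use s A terms_nonneg[of c, OF c0] in \<open>auto simp: wsum_def\<close>)
  finally show ?thesis by (rule real_le_rsqrt)
qed

end


definition e :: "nat \<Rightarrow> nat \<Rightarrow> complex" where "e k = (\<lambda>i. if i = k then 1 else 0)"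
definition orb :: "nat \<Rightarrow> nat \<Rightarrow> nat" where "orb k p = (collatz ^^ p) k"

lemma orb_Suc: "orb k (Suc p) = collatz (orb k p)" by (simp add: orb_def)
lemma orb_0[simp]: "orb k 0 = k" by (simp add: orb_def)
lemma orb_add: "orb (orb k p) q = orb k (q + p)" by (simp add: orb_def funpow_add)

lemma Tcoef_e: "Tcoef (e j) = (if 3 \<le> j \<and> 3 \<le> collatz j then e (collatz j) else (\<lambda>_. 0))"
proof
  fix m
  have "Tcoef (e j) m = (if m < 3 then 0 else (\<Sum>i\<in>P1 m. if i = j then 1 else 0))"
    by (simp add: Tcoef_P1 e_def)
  also have "\<dots> = (if m < 3 then 0 else if j \<in> P1 m then 1 else 0)"
    using P1_finite by (simp add: sum.delta')
  also have "\<dots> = (if 3 \<le> j \<and> 3 \<le> collatz j then e (collatz j) else (\<lambda>_. 0)) m"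
    by (auto simp: P1_def e_def)
  finally show "Tcoef (e j) m = (if 3 \<le> j \<and> 3 \<le> collatz j then e (collatz j) else (\<lambda>_. 0)) m" .
qed

lemma Tcoef_zero: "Tcoef (\<lambda>_. 0) = (\<lambda>_. 0)"
  using Tn_zero'[of 1] by simp

lemma Tn_e: "3 \<le> k \<Longrightarrow> Tn p (e k) = (if \<forall>q\<le>p. 3 \<le> orb k q then e (orb k p) else (\<lambda>_. 0))"
proof (induction p)
  case 0 thus ?case by simp
next
  case (Suc p)
  show ?case
  proof (cases "\<forall>q\<le>p. 3 \<le> orb k q")
    case True
    hence "Tn (Suc p) (e k) = Tcoef (e (orb k p))" using Suc by simp
    also have "\<dots> = (if 3 \<le> orb k (Suc p) then e (orb k (Suc p)) else (\<lambda>_. 0))"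
      using True by (simp add: Tcoef_e orb_Suc)
    also have "\<dots> = (if \<forall>q\<le>Suc p. 3 \<le> orb k q then e (orb k (Suc p)) else (\<lambda>_. 0))"
      using True le_Suc_eq by auto
    finally show ?thesis .
  next
    case False
    have "Tn p (e k) = (\<lambda>_. 0)" using Suc False by simp
    hence "Tn (Suc p) (e k) = (\<lambda>_. 0)" by (simp add: Tcoef_zero)
    thus ?thesis using False by auto
  qed
qed

lemma supp3_e: "3 \<le> k \<Longrightarrow> supp3 (e k)" by (simp add: supp3_def e_def)

lemma sh_e: "sh p (e x) = e (2^p * x)"
  by (auto simp: sh_def e_def fun_eq_iff)

definition bad :: "nat \<Rightarrow> bool" where "bad k \<longleftrightarrow> (\<forall>q. 3 \<le> orb k q)"

definition Odd :: "nat \<Rightarrow> nat set" where "Odd k = {p. odd (orb k p)}"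

lemma Odd_infinite: assumes b: "bad k" shows "infinite (Odd k)"
proof
  assume fin: "finite (Odd k)"
  obtain P where P: "\<forall>p\<ge>P. even (orb k p)"
  proof -
    obtain P where "\<forall>p\<in>Odd k. p < P" using fin finite_nat_bounded by blast
    thus ?thesis using that[of P] by (auto simp: Odd_def) (meson not_le)
  qed
  have h: "orb k (P + t) * 2^t = orb k P" for t
  proof (induction t)
    case 0 thus ?case by simp
  next
    case (Suc t)
    have ev: "even (orb k (P+t))" using P by simp
    have "orb k (P + Suc t) = orb k (P+t) div 2" using ev by (simp add: orb_Suc collatz_def)
    hence "orb k (P + Suc t) * 2^(Suc t) = (orb k (P+t) div 2 * 2) * 2^t" by simp
    also have "\<dots> = orb k (P+t) * 2^t" using ev by simp
    finally show ?case using Suc by simp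
  qed
  have "3 \<le> orb k (P + orb k P)" using b by (simp add: bad_def)
  hence "3 * 2^(orb k P) \<le> orb k P" using h[of "orb k P"]
    by (metis mult_le_mono1)
  moreover have "orb k P < 2^(orb k P)" by (rule less_exp)
  ultimately show False by linarith
qed

definition jj :: "nat \<Rightarrow> nat \<Rightarrow> nat" where "jj k p = 2^p * orb k p"

lemma jj_mono_Suc: "jj k p \<le> jj k (Suc p)"
proof (cases "even (orb k p)")
  case True
  then obtain x where x: "orb k p = 2*x" by blast
  thus ?thesis by (simp add: jj_def orb_Suc collatz_def)
next
  case False
  hence c: "2 * collatz (orb k p) = 3 * orb k p + 1" by (simp add: collatz_def)
  have "jj k (Suc p) = 2^p * (2 * collatz (orb k p))" by (simp add: jj_def orb_Suc)
  also have "\<dots> = 2^p * (3 * orb k p + 1)" using c by simp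
  finally show ?thesis by (simp add: jj_def)
qed

lemma jj_strict_Suc: "odd (orb k p) \<Longrightarrow> jj k p < jj k (Suc p)"
proof -
  assume o: "odd (orb k p)"
  hence c: "2 * collatz (orb k p) = 3 * orb k p + 1" by (simp add: collatz_def)
  have "jj k (Suc p) = 2^p * (2 * collatz (orb k p))" by (simp add: jj_def orb_Suc)
  also have "\<dots> = 2^p * (3 * orb k p + 1)" using c by simp
  finally show ?thesis by (simp add: jj_def)
qed

lemma jj_inj: "inj_on (jj k) (Odd k)"
proof (rule inj_onI)
  have lt: "jj k p < jj k p'" if "p \<in> Odd k" "p < p'" for p p'
  proof -
    have "jj k p < jj k (Suc p)" using that by (simp add: Odd_def jj_strict_Suc)
    also have "\<dots> \<le> jj k p'" using lift_Suc_mono_le[of "jj k", OF jj_mono_Suc] that by simp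
    finally show ?thesis .
  qed
  fix p p' assume "p \<in> Odd k" "p' \<in> Odd k" "jj k p = jj k p'"
  thus "p = p'" using lt by (metis less_irrefl nat_neq_iff)
qed

lemma jj_ge: "bad k \<Longrightarrow> 3 \<le> jj k p"
proof -
  assume "bad k" hence "3 \<le> orb k p" by (simp add: bad_def)
  moreover have "orb k p \<le> jj k p" by (simp add: jj_def)
  ultimately show ?thesis by linarith
qed

lemma Tn_e_jj: assumes b: "bad k" and "3 \<le> k" "p \<le> K"
  shows "Tn K (e (jj k p)) = e (orb k K)"
proof -
  have o3: "3 \<le> orb k p" using b by (simp add: bad_def)
  have "Tn K (e (jj k p)) = Tn K (sh p (e (orb k p)))" by (simp add: sh_e jj_def)
  also have "\<dots> = Tn (K - p) (e (orb k p))" by (rule Tn_sh_ge[OF supp3_e[OF o3] assms(3)])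
  also have "\<dots> = e (orb (orb k p) (K-p))"
    using Tn_e[OF o3, of "K-p"] b by (simp add: orb_add bad_def)
  also have "\<dots> = e (orb k K)" using assms by (simp add: orb_add)
  finally show ?thesis .
qed

definition FF :: "nat \<Rightarrow> nat \<Rightarrow> nat set" where
  "FF k M = (SOME F. finite F \<and> card F = Suc M \<and> F \<subseteq> Odd k)"

lemma FF: assumes "bad k" shows "finite (FF k M)" "card (FF k M) = Suc M" "FF k M \<subseteq> Odd k"
proof -
  have "\<exists>F. finite F \<and> card F = Suc M \<and> F \<subseteq> Odd k"
    using infinite_arbitrarily_large[OF Odd_infinite[OF assms]] .
  from someI_ex[OF this] show "finite (FF k M)" "card (FF k M) = Suc M" "FF k M \<subseteq> Odd k"
    unfolding FF_def by blast+
qed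

definition XX :: "nat \<Rightarrow> nat \<Rightarrow> nat \<Rightarrow> complex" where
  "XX k M = (if k < 3 then (\<lambda>_. 0) else if \<not> bad k then e k
     else (\<lambda>i. e k i - (1 / of_nat (Suc M)) * (\<Sum>p\<in>FF k M. e (jj k p) i)))"

definition killed :: "(nat \<Rightarrow> complex) \<Rightarrow> bool" where
  "killed y \<longleftrightarrow> (\<exists>K. \<forall>K'\<ge>K. Tn K' y = (\<lambda>_. 0))"

lemma killedI: assumes "Tn K y = (\<lambda>_. 0)" shows "killed y"
  unfolding killed_def
proof (intro exI allI impI)
  fix K' assume "K \<le> K'"
  hence "Tn K' y = Tn (K'-K) (Tn K y)" using Tn_add[of "K'-K" K] by simp
  thus "Tn K' y = (\<lambda>_. 0)" using assms Tn_zero' by simp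
qed

lemma killed_add: "killed y \<Longrightarrow> killed z \<Longrightarrow> killed (\<lambda>i. y i + z i)"
  unfolding killed_def
proof -
  assume "\<exists>K. \<forall>K'\<ge>K. Tn K' y = (\<lambda>_. 0)" "\<exists>K. \<forall>K'\<ge>K. Tn K' z = (\<lambda>_. 0)"
  then obtain K1 K2 where K: "\<forall>K'\<ge>K1. Tn K' y = (\<lambda>_. 0)" "\<forall>K'\<ge>K2. Tn K' z = (\<lambda>_. 0)" by blast
  have "Tn K' (\<lambda>i. y i + z i) = (\<lambda>_. 0)" if "K' \<ge> K1 + K2" for K'
  proof
    fix m
    have "Tn K' (\<lambda>i. y i + z i) m = Tn K' y m + Tn K' z m" by (simp add: Tn_Pre sum.distrib)
    thus "Tn K' (\<lambda>i. y i + z i) m = 0" using K that by (simp add: fun_eq_iff)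
  qed
  thus "\<exists>K. \<forall>K'\<ge>K. Tn K' (\<lambda>i. y i + z i) = (\<lambda>_. 0)" by blast
qed

lemma killed_scale: "killed y \<Longrightarrow> killed (\<lambda>i. a * y i)"
  unfolding killed_def using Tn_scale by (metis mult_zero_right)

lemma killed_zero: "killed (\<lambda>_. 0)"
  using killedI[of 0] by simp

lemma killed_XX: "killed (XX k M)"
proof (cases "k < 3")
  case True thus ?thesis by (simp add: XX_def killed_zero)
next
  case False
  hence k3: "3 \<le> k" by simp
  show ?thesis
  proof (cases "bad k")
    case False
    then obtain q where q: "orb k q < 3" unfolding bad_def by (meson not_le)
    have "Tn q (e k) = (\<lambda>_. 0)" using Tn_e[OF k3, of q] q by auto
    thus ?thesis using False k3 by (simp add: XX_def killedI)
  next
    case True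
    define F where "F = FF k M"
    have F: "finite F" "card F = Suc M" using FF[OF True] by (auto simp: F_def)
    define K where "K = Max F"
    have pK: "p \<le> K" if "p \<in> F" for p using F that by (simp add: K_def)
    have "Tn K (XX k M) = (\<lambda>_. 0)"
    proof
      fix m
      define a :: complex where "a = 1 / of_nat (Suc M)"
      have X: "XX k M = (\<lambda>i. e k i - a * (\<Sum>p\<in>F. e (jj k p) i))"
        using True k3 by (simp add: XX_def F_def a_def)
      have "Tn K (XX k M) m = Tn K (e k) m - a * (\<Sum>p\<in>F. Tn K (e (jj k p)) m)"
        unfolding X by (simp only: Tn_diff Tn_scale Tn_sum)
      also have "(\<Sum>p\<in>F. Tn K (e (jj k p)) m) = (\<Sum>p\<in>F. e (orb k K) m)"
        by (rule sum.cong) (auto simp: Tn_e_jj[OF True k3] pK)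
      also have "\<dots> = of_nat (Suc M) * e (orb k K) m" using F by simp
      also have "Tn K (e k) m = e (orb k K) m" using Tn_e[OF k3, of K] True by (simp add: bad_def)
      finally show "Tn K (XX k M) m = 0" by (simp add: a_def del: of_nat_Suc)
    qed
    thus ?thesis by (rule killedI)
  qed
qed

definition fsupp :: "(nat \<Rightarrow> complex) \<Rightarrow> bool" where
  "fsupp y \<longleftrightarrow> (\<exists>B. \<forall>i\<ge>B. y i = 0)"

lemma fsupp_add: "fsupp y \<Longrightarrow> fsupp z \<Longrightarrow> fsupp (\<lambda>i. y i + z i)"
  unfolding fsupp_def by (metis add.right_neutral max.bounded_iff nat_le_linear)

lemma fsupp_scale: "fsupp y \<Longrightarrow> fsupp (\<lambda>i. a * y i)"
  unfolding fsupp_def by auto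

lemma fsupp_e: "fsupp (e k)"
  unfolding fsupp_def e_def by (rule exI[of _ "Suc k"]) auto

lemma fsupp_sum: "fsupp (\<lambda>i. \<Sum>p\<in>F. v p i)" if "\<And>p. p \<in> F \<Longrightarrow> fsupp (v p)"
  using that
proof (induction F rule: infinite_finite_induct)
  case (infinite A) thus ?case by (simp add: fsupp_def)
next
  case empty thus ?case by (simp add: fsupp_def)
next
  case (insert x F)
  thus ?case using fsupp_add[of "v x" "\<lambda>i. \<Sum>p\<in>F. v p i"] by simp
qed

lemma fsupp_XX: "fsupp (XX k M)"
proof (cases "k < 3 \<or> \<not> bad k")
  case True thus ?thesis using fsupp_e[of k] by (auto simp: XX_def fsupp_def)
next
  case False
  have "fsupp (\<lambda>i. e k i - (1 / of_nat (Suc M)) * (\<Sum>p\<in>FF k M. e (jj k p) i))"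
    using fsupp_add[OF fsupp_e fsupp_scale[OF fsupp_sum[of "FF k M" "\<lambda>p. e (jj k p)"]], of k "- (1 / of_nat (Suc M))"]
    by (simp add: fsupp_e)
  thus ?thesis using False by (simp add: XX_def)
qed

lemma supp3_XX: "supp3 (XX k M)"
proof -
  have "XX k M i = 0" if "i < 3" for i
  proof (cases "k < 3 \<or> \<not> bad k")
    case True thus ?thesis using that by (auto simp: XX_def e_def)
  next
    case False
    hence "bad k" "3 \<le> k" by auto
    have "\<forall>p. 3 \<le> jj k p" using jj_ge[OF \<open>bad k\<close>] by blast
    hence "\<forall>p. e (jj k p) i = 0" using that by (simp add: e_def) (metis not_le)
    hence "(\<Sum>p\<in>FF k M. e (jj k p) i) = 0" by simp
    thus ?thesis using False that by (simp add: XX_def e_def)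
  qed
  thus ?thesis by (simp add: supp3_def)
qed


locale WD = W +
  fixes \<delta> :: real
  assumes dpos: "0 < \<delta>" and dlow: "\<And>n. 1 \<le> n \<Longrightarrow> \<delta> \<le> \<omega> n"
begin

lemma inv_w_le: "1 \<le> n \<Longrightarrow> 1 / \<omega> n \<le> 1 / \<delta>"
  using dlow[of n] dpos by (simp add: frac_le)

lemma Lp_e: assumes A: "finite A" "A \<subseteq> {1..}" shows "Lp \<omega> (e k) A \<le> sqrt (1 / \<delta>)"
proof -
  have "(Lp \<omega> (e k) A)\<^sup>2 = (\<Sum>i\<in>A. (cmod (e k i))\<^sup>2 / \<omega> i)" by (rule Lp_sq[OF A(2)])
  also have "\<dots> = (\<Sum>i\<in>A. if i = k then 1 / \<omega> k else 0)"
    by (rule sum.cong) (auto simp: e_def)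
  also have "\<dots> = (if k \<in> A then 1 / \<omega> k else 0)" using A by (simp add: sum.delta)
  also have "\<dots> \<le> 1 / \<delta>" using inv_w_le[of k] A dpos by auto
  finally show ?thesis by (rule real_le_rsqrt)
qed

lemma Lp_XX: assumes A: "finite A" "A \<subseteq> {1..}" and k: "3 \<le> k"
  shows "Lp \<omega> (\<lambda>i. e k i - XX k M i) A \<le> sqrt (1 / (real (Suc M) * \<delta>))"
proof (cases "bad k")
  case False
  hence "(\<lambda>i. e k i - XX k M i) = (\<lambda>i. 0 * e k i)" using k by (simp add: XX_def)
  hence "Lp \<omega> (\<lambda>i. e k i - XX k M i) A = 0" by (simp only: Lp_scale) simp
  thus ?thesis using dpos by simp
next
  case True
  define F where "F = FF k M"
  have F: "finite F" "card F = Suc M" "F \<subseteq> Odd k" using FF[OF True] by (auto simp: F_def)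
  define G where "G = jj k ` F"
  have G: "finite G" "card G \<le> Suc M" using F card_image_le[of F "jj k"] by (auto simp: G_def)
  define g where "g = (\<lambda>i. \<Sum>p\<in>F. e (jj k p) i)"
  have g: "g i = (if i \<in> G then 1 else 0)" for i
  proof -
    have inj: "inj_on (jj k) F" using jj_inj[of k] F(3) inj_on_subset by blast
    have "g i = (\<Sum>j\<in>G. e j i)" unfolding g_def G_def by (simp add: sum.reindex[OF inj])
    also have "\<dots> = (if i \<in> G then 1 else 0)" using G by (simp add: e_def sum.delta)
    finally show ?thesis .
  qed
  have eq: "(\<lambda>i. e k i - XX k M i) = (\<lambda>i. (1 / of_nat (Suc M)) * g i)"
    using True k by (simp add: XX_def g_def F_def)
  have "(Lp \<omega> g A)\<^sup>2 = (\<Sum>i\<in>A. (cmod (g i))\<^sup>2 / \<omega> i)" by (rule Lp_sq[OF A(2)])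
  also have "\<dots> \<le> (\<Sum>i\<in>A. if i \<in> G then 1 / \<delta> else 0)"
  proof (rule sum_mono)
    fix i assume "i \<in> A" hence "1 \<le> i" using A by auto
    thus "(cmod (g i))\<^sup>2 / \<omega> i \<le> (if i \<in> G then 1 / \<delta> else 0)" using inv_w_le[of i] by (simp add: g)
  qed
  also have "\<dots> = (\<Sum>i\<in>A \<inter> G. 1 / \<delta>)" by (rule sum.inter_restrict[symmetric, OF A(1)])
  also have "\<dots> = real (card (A \<inter> G)) / \<delta>" by simp
  also have "\<dots> \<le> real (Suc M) / \<delta>"
  proof -
    have "card (A \<inter> G) \<le> card G" using G by (simp add: card_mono)
    hence "real (card (A \<inter> G)) \<le> real (Suc M)" using G by linarith
    thus ?thesis using dpos by (simp add: divide_right_mono)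
  qed
  finally have g2: "(Lp \<omega> g A)\<^sup>2 \<le> real (Suc M) / \<delta>" .
  have "(Lp \<omega> (\<lambda>i. e k i - XX k M i) A)\<^sup>2 = (1 / real (Suc M))\<^sup>2 * (Lp \<omega> g A)\<^sup>2"
    unfolding eq Lp_scale by (simp add: power_mult_distrib norm_divide power_divide del: of_nat_Suc)
  also have "\<dots> \<le> (1 / real (Suc M))\<^sup>2 * (real (Suc M) / \<delta>)"
    by (rule mult_left_mono[OF g2]) simp
  also have "\<dots> = 1 / (real (Suc M) * \<delta>)" by (simp add: power2_eq_square del: of_nat_Suc)
  finally show ?thesis by (rule real_le_rsqrt)
qed

end

definition qc :: "rat \<Rightarrow> rat \<Rightarrow> complex" where "qc a b = Complex (of_rat a) (of_rat b)"

type_synonym code = "nat \<times> (nat \<times> rat \<times> rat) list"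

definition Phi :: "code \<Rightarrow> nat \<Rightarrow> complex" where
  "Phi cd = (\<lambda>i. sum_list (map (\<lambda>(k,a,b). qc a b * XX k (fst cd) i) (snd cd)))"

lemma Phi_props: "killed (Phi cd) \<and> fsupp (Phi cd) \<and> supp3 (Phi cd)"
proof -
  obtain M xs where cd: "cd = (M, xs)" by (cases cd)
  have "killed (Phi (M, xs)) \<and> fsupp (Phi (M, xs)) \<and> supp3 (Phi (M, xs))"
  proof (induction xs)
    case Nil thus ?case by (simp add: Phi_def killed_zero fsupp_def supp3_def)
  next
    case (Cons x xs)
    obtain k a b where x: "x = (k, a, b)" by (cases x) auto
    have eq: "Phi (M, x # xs) = (\<lambda>i. qc a b * XX k M i + Phi (M, xs) i)"
      by (simp add: Phi_def x)
    show ?case unfolding eq using Cons supp3_XX[of k M]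
      by (auto intro!: killed_add killed_scale killed_XX fsupp_add fsupp_scale fsupp_XX
               simp: supp3_def)
  qed
  thus ?thesis using cd by simp
qed


context WD begin

lemma tail_small:
  assumes c0: "c 0 = 0" and s: "wsum \<omega> c" and ep: "0 < \<epsilon>"
  shows "\<exists>N\<ge>3. \<forall>K. (\<Sum>i\<in>{N..<K}. (cmod (c i))\<^sup>2 / \<omega> i) \<le> \<epsilon>"
proof -
  define g where "g = (\<lambda>i. (cmod (c i))\<^sup>2 / \<omega> i)"
  have sg: "summable g" using s by (simp add: wsum_def g_def)
  have g0: "\<And>i. 0 \<le> g i" unfolding g_def using terms_nonneg[of c, OF c0] .
  have "(\<lambda>n. \<Sum>i<n. g i) \<longlonglongrightarrow> suminf g" using summable_LIMSEQ[OF sg] .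
  then obtain N0 where N0: "\<forall>n\<ge>N0. dist (\<Sum>i<n. g i) (suminf g) < \<epsilon>"
    using ep unfolding lim_sequentially by blast
  define N where "N = max N0 3"
  have le: "(\<Sum>i<n. g i) \<le> suminf g" for n by (rule sum_le_suminf[OF sg]) (auto simp: g0)
  have "(\<Sum>i\<in>{N..<K}. g i) \<le> \<epsilon>" for K
  proof (cases "N \<le> K")
    case True
    have "(\<Sum>i<K. g i) = (\<Sum>i<N. g i) + (\<Sum>i\<in>{N..<K}. g i)"
      using sum.atLeastLessThan_concat[of 0 N K g] True by (simp add: atLeast0LessThan)
    hence "(\<Sum>i\<in>{N..<K}. g i) = (\<Sum>i<K. g i) - (\<Sum>i<N. g i)" by simp
    also have "\<dots> \<le> suminf g - (\<Sum>i<N. g i)" using le[of K] by simp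
    also have "\<dots> \<le> \<epsilon>" using N0[rule_format, of N] by (simp add: N_def dist_real_def)
    finally show ?thesis .
  next
    case False thus ?thesis using ep by simp
  qed
  thus ?thesis unfolding g_def N_def by (intro exI[of _ "max N0 3"]) auto
qed

lemma density:
  assumes a3: "supp3 a" and s: "wsum \<omega> a" and r: "0 < r"
  shows "\<exists>cd B. B < r \<and> (\<forall>K. Lp \<omega> (\<lambda>i. Phi cd i - a i) {1..<K} \<le> B)"
proof -
  have a0: "a 0 = 0" using a3 by (simp add: supp3_def)
  obtain N where N3: "N \<ge> 3" and N: "\<forall>K. (\<Sum>i\<in>{N..<K}. (cmod (a i))\<^sup>2 / \<omega> i) \<le> (r/4)\<^sup>2"
    using tail_small[OF a0 s, of "(r/4)\<^sup>2"] r by auto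
  define tl where "tl = (\<lambda>i. if N \<le> i then a i else 0)"
  have Ltl: "Lp \<omega> tl {1..<K} \<le> r/4" for K
  proof -
    have "(Lp \<omega> tl {1..<K})\<^sup>2 = (\<Sum>i\<in>{1..<K}. (cmod (tl i))\<^sup>2 / \<omega> i)" by (rule Lp_sq) auto
    also have "\<dots> = (\<Sum>i\<in>{1..<K}. if N \<le> i then (cmod (a i))\<^sup>2 / \<omega> i else 0)"
      by (rule sum.cong) (auto simp: tl_def)
    also have "\<dots> = (\<Sum>i\<in>{i\<in>{1..<K}. N \<le> i}. (cmod (a i))\<^sup>2 / \<omega> i)"
      by (rule sum.inter_filter[symmetric]) simp
    also have "{i\<in>{1..<K}. N \<le> i} = {N..<K}" using N3 by auto
    also have "(\<Sum>i\<in>{N..<K}. (cmod (a i))\<^sup>2 / \<omega> i) \<le> (r/4)\<^sup>2" using N by blast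
    finally show ?thesis by (rule power2_le_imp_le) (use r in simp)
  qed
  define \<eta> where "\<eta> = r * sqrt \<delta> / (8 * real N)"
  have \<eta>: "0 < \<eta>" using r dpos N3 by (simp add: \<eta>_def)
  have "\<forall>k. \<exists>q::rat. Re (a k) - \<eta>/2 < of_rat q \<and> of_rat q < Re (a k) + \<eta>/2"
  proof
    fix k show "\<exists>q::rat. Re (a k) - \<eta>/2 < of_rat q \<and> of_rat q < Re (a k) + \<eta>/2"
      by (rule of_rat_dense) (use \<eta> in simp)
  qed
  then obtain qa where qa: "\<forall>k. Re (a k) - \<eta>/2 < of_rat (qa k) \<and> of_rat (qa k) < Re (a k) + \<eta>/2"
    by metis
  have "\<forall>k. \<exists>q::rat. Im (a k) - \<eta>/2 < of_rat q \<and> of_rat q < Im (a k) + \<eta>/2"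
  proof
    fix k show "\<exists>q::rat. Im (a k) - \<eta>/2 < of_rat q \<and> of_rat q < Im (a k) + \<eta>/2"
      by (rule of_rat_dense) (use \<eta> in simp)
  qed
  then obtain qb where qb: "\<forall>k. Im (a k) - \<eta>/2 < of_rat (qb k) \<and> of_rat (qb k) < Im (a k) + \<eta>/2"
    by metis
  define q where "q = (\<lambda>k. qc (qa k) (qb k))"
  have qd: "cmod (q k - a k) \<le> \<eta>" for k
  proof -
    have "cmod (q k - a k) \<le> \<bar>Re (q k - a k)\<bar> + \<bar>Im (q k - a k)\<bar>" by (rule cmod_le)
    also have "\<dots> \<le> \<eta>/2 + \<eta>/2"
    proof (rule add_mono)
      show "\<bar>Re (q k - a k)\<bar> \<le> \<eta>/2" using qa[rule_format, of k] by (simp add: q_def qc_def abs_if)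
      show "\<bar>Im (q k - a k)\<bar> \<le> \<eta>/2" using qb[rule_format, of k] by (simp add: q_def qc_def abs_if)
    qed
    finally show ?thesis by simp
  qed
  define Q where "Q = (\<Sum>k\<in>{3..<N}. cmod (q k))"
  have Q0: "0 \<le> Q" by (simp add: Q_def sum_nonneg)
  obtain M :: nat where M: "16 * Q\<^sup>2 / (r\<^sup>2 * \<delta>) \<le> real M" using real_arch_simple by blast
  define s where "s = sqrt (1 / (real (Suc M) * \<delta>))"
  have Qs: "Q * s \<le> r/4"
  proof -
    have rd: "0 < r\<^sup>2 * \<delta>" using r dpos by simp
    have "16 * Q\<^sup>2 \<le> real M * (r\<^sup>2 * \<delta>)" using M by (simp add: pos_divide_le_eq[OF rd])
    also have "\<dots> \<le> real (Suc M) * (r\<^sup>2 * \<delta>)" using r dpos by (intro mult_right_mono) auto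
    moreover have "(r/4)\<^sup>2 * (real (Suc M) * \<delta>) = real (Suc M) * (r\<^sup>2 * \<delta>) / 16"
      by (simp add: power_divide)
    ultimately have h: "Q\<^sup>2 \<le> (r/4)\<^sup>2 * (real (Suc M) * \<delta>)" by linarith
    have pos: "0 < real (Suc M) * \<delta>" using dpos by simp
    have "(Q * s)\<^sup>2 = Q\<^sup>2 / (real (Suc M) * \<delta>)" using pos by (simp add: s_def power_mult_distrib)
    also have "\<dots> \<le> (r/4)\<^sup>2" using h pos by (simp add: divide_le_eq)
    finally show ?thesis by (rule power2_le_imp_le) (use r in simp)
  qed
  define cd :: code where "cd = (M, map (\<lambda>k. (k, qa k, qb k)) [3..<N])"
  have Phi_eq: "Phi cd i = (\<Sum>k\<in>{3..<N}. q k * XX k M i)" for i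
  proof -
    have "Phi cd i = sum_list (map (\<lambda>k. q k * XX k M i) [3..<N])"
      by (simp add: Phi_def cd_def q_def o_def)
    also have "\<dots> = (\<Sum>k\<in>{3..<N}. q k * XX k M i)"
      by (simp add: sum_set_upt_conv_sum_list_nat[symmetric])
    finally show ?thesis .
  qed
  have a_eq: "a i = (\<Sum>k\<in>{3..<N}. a k * e k i) + tl i" for i
  proof -
    have "(\<Sum>k\<in>{3..<N}. a k * e k i) = (\<Sum>k\<in>{3..<N}. if i = k then a k else 0)"
      by (rule sum.cong) (auto simp: e_def)
    also have "\<dots> = (if i \<in> {3..<N} then a i else 0)"
      by (rule sum.delta') simp
    finally have "(\<Sum>k\<in>{3..<N}. a k * e k i) = (if i \<in> {3..<N} then a i else 0)" .
    thus ?thesis using a3 by (auto simp: tl_def supp3_def)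
  qed
  define X1 where "X1 = (\<lambda>i. \<Sum>k\<in>{3..<N}. q k * (XX k M i - e k i))"
  define X2 where "X2 = (\<lambda>i. \<Sum>k\<in>{3..<N}. (q k - a k) * e k i)"
  have dec: "(\<lambda>i. Phi cd i - a i) = (\<lambda>i. (X1 i + X2 i) - tl i)"
  proof
    fix i
    have "Phi cd i - a i = (\<Sum>k\<in>{3..<N}. q k * XX k M i) - (\<Sum>k\<in>{3..<N}. a k * e k i) - tl i"
      using Phi_eq a_eq[of i] by simp
    also have "(\<Sum>k\<in>{3..<N}. q k * XX k M i) - (\<Sum>k\<in>{3..<N}. a k * e k i) = X1 i + X2 i"
    proof -
      have "X1 i + X2 i = (\<Sum>k\<in>{3..<N}. q k * (XX k M i - e k i) + (q k - a k) * e k i)"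
        by (simp add: X1_def X2_def sum.distrib)
      also have "\<dots> = (\<Sum>k\<in>{3..<N}. q k * XX k M i - a k * e k i)"
        by (rule sum.cong[OF refl]) (simp add: right_diff_distrib left_diff_distrib)
      also have "\<dots> = (\<Sum>k\<in>{3..<N}. q k * XX k M i) - (\<Sum>k\<in>{3..<N}. a k * e k i)"
        by (rule sum_subtractf)
      finally show ?thesis by simp
    qed
    finally show "Phi cd i - a i = (X1 i + X2 i) - tl i" .
  qed
  have L1: "Lp \<omega> X1 {1..<K} \<le> r/4" for K
  proof -
    have "Lp \<omega> X1 {1..<K} \<le> (\<Sum>k\<in>{3..<N}. Lp \<omega> (\<lambda>i. q k * (XX k M i - e k i)) {1..<K})"
      unfolding X1_def by (rule Lp_sum) auto
    also have "\<dots> = (\<Sum>k\<in>{3..<N}. cmod (q k) * Lp \<omega> (\<lambda>i. e k i - XX k M i) {1..<K})"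
      by (rule sum.cong[OF refl], subst Lp_scale, subst Lp_commute, rule refl)
    also have "\<dots> \<le> (\<Sum>k\<in>{3..<N}. cmod (q k) * s)"
      by (rule sum_mono, rule mult_left_mono) (auto simp del: of_nat_Suc simp add: s_def intro!: Lp_XX)
    also have "\<dots> = Q * s" by (simp add: Q_def sum_distrib_right)
    finally show ?thesis using Qs by linarith
  qed
  have L2: "Lp \<omega> X2 {1..<K} \<le> r/8" for K
  proof -
    have "Lp \<omega> X2 {1..<K} \<le> (\<Sum>k\<in>{3..<N}. Lp \<omega> (\<lambda>i. (q k - a k) * e k i) {1..<K})"
      unfolding X2_def by (rule Lp_sum) auto
    also have "\<dots> = (\<Sum>k\<in>{3..<N}. cmod (q k - a k) * Lp \<omega> (e k) {1..<K})"
      by (simp add: Lp_scale)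
    also have "\<dots> \<le> (\<Sum>k\<in>{3..<N}. \<eta> * sqrt (1/\<delta>))"
      by (rule sum_mono, rule mult_mono) (use \<eta> in \<open>auto simp: qd Lp_nonneg intro!: Lp_e\<close>)
    also have "\<dots> = real (N - 3) * \<eta> * sqrt (1/\<delta>)" by simp
    also have "\<dots> \<le> real N * \<eta> * sqrt (1/\<delta>)"
      using \<eta> dpos by (intro mult_right_mono) auto
    also have "\<dots> = r / 8"
    proof -
      have sd: "sqrt \<delta> * sqrt (1/\<delta>) = 1" using dpos by (simp add: real_sqrt_mult[symmetric])
      have "real N * \<eta> * sqrt (1/\<delta>) = (real N / real N) * (r / 8) * (sqrt \<delta> * sqrt (1/\<delta>))"
        by (simp add: \<eta>_def)
      also have "\<dots> = r / 8" using N3 sd by simp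
      finally show ?thesis .
    qed
    finally show ?thesis .
  qed
  have "Lp \<omega> (\<lambda>i. Phi cd i - a i) {1..<K} \<le> r/4 + r/8 + r/4" for K
  proof -
    have "Lp \<omega> (\<lambda>i. Phi cd i - a i) {1..<K} \<le> Lp \<omega> (\<lambda>i. X1 i + X2 i) {1..<K} + Lp \<omega> tl {1..<K}"
      unfolding dec by (rule Lp_diff) auto
    also have "\<dots> \<le> (Lp \<omega> X1 {1..<K} + Lp \<omega> X2 {1..<K}) + Lp \<omega> tl {1..<K}"
      by (intro add_right_mono Lp_add) auto
    finally show ?thesis using L1[of K] L2[of K] Ltl[of K] by linarith
  qed
  moreover have "r/4 + r/8 + r/4 < r" using r by simp
  ultimately show ?thesis by blast
qed

end


locale SETS =
  fixes W :: "nat \<Rightarrow> nat"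
  assumes monoW: "\<And>i j. i \<le> j \<Longrightarrow> W i \<le> W j"
begin

definition b :: "nat \<Rightarrow> nat" where "b j = 2^(j+3) * (W (j+2) + 1)"

fun D :: "nat \<Rightarrow> nat" where
  "D 0 = W 1 + 1"
| "D (Suc j) = b j * D j"

lemma D_Suc: "D (Suc j) = b j * D j" by simp
declare D.simps(2)[simp del]

definition AL :: "nat \<Rightarrow> nat set" where "AL k = {d. d < b k \<and> d \<noteq> 1 \<and> d \<noteq> b k - 1}"

fun G :: "nat \<Rightarrow> nat \<Rightarrow> nat set" where
  "G l 0 = {}"
| "G l (Suc k) = (if k < l then {} else if k = l then {D l}
      else (\<lambda>(d,r). d * D k + r) ` (AL k \<times> G l k))"

definition A :: "nat \<Rightarrow> nat set" where "A l = (\<Union>k. G l k)"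

lemma b_ge: "2^(j+3) \<le> b j" by (simp add: b_def)
lemma b_ge8: "8 \<le> b j"
proof -
  have "(8::nat) = 2^3" by simp
  also have "\<dots> \<le> 2^(j+3)" by (rule power_increasing) auto
  finally show ?thesis using b_ge[of j] by linarith
qed
lemma b_geW: "W (j+2) \<le> b j"
proof -
  have "W (j+2) + 1 \<le> 2^(j+3) * (W (j+2) + 1)" using mult_le_mono1[of 1 "2^(j+3)" "W (j+2)+1"] by simp
  thus ?thesis by (simp add: b_def)
qed

lemma D_pos: "1 \<le> D j"
proof (induction j)
  case (Suc j)
  have "1 * 1 \<le> b j * D j" using b_ge8[of j] Suc by (intro mult_le_mono) auto
  thus ?case by (simp add: D_Suc)
qed simp
lemma D_pos'[simp]: "0 < D j" using D_pos[of j] by simp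
lemma D_Suc_ge: "8 * D j \<le> D (Suc j)" using b_ge8[of j] by (simp add: D_Suc)
lemma D_lt: "D j < D (Suc j)" using D_Suc_ge[of j] D_pos[of j] by linarith
lemma D_mono: "i \<le> j \<Longrightarrow> D i \<le> D j" using lift_Suc_mono_le[of D, OF less_imp_le[OF D_lt]] by blast
lemma D_smono: "i < j \<Longrightarrow> D i < D j" using lift_Suc_mono_less[of D, OF D_lt] by blast
lemma D_ge_pow: "2^j \<le> D j"
proof (induction j)
  case 0 thus ?case using D_pos[of 0] by simp
next
  case (Suc j)
  have "2^(Suc j) \<le> 8 * D j" using Suc by simp
  also have "8 * D j \<le> D (Suc j)" by (rule D_Suc_ge)
  finally show ?case .
qed
lemma D_geW: "W (Suc j) \<le> D j"
proof (cases j)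
  case 0 thus ?thesis by simp
next
  case (Suc i)
  have "W (Suc j) \<le> b i" using b_geW[of i] Suc by simp
  also have "\<dots> \<le> b i * D i" using D_pos[of i] by simp
  finally show ?thesis using Suc by (simp add: D_Suc)
qed
lemma D_dvd: "i \<le> j \<Longrightarrow> D i dvd D j"
proof (induction j)
  case 0 thus ?case by simp
next
  case (Suc j) thus ?case by (cases "i = Suc j") (auto simp: D_Suc)
qed

lemma zero_AL: "0 \<in> AL k" using b_ge8[of k] by (auto simp: AL_def)

lemma G_lt: "n \<in> G l k \<Longrightarrow> l < k"
  by (induction k) (auto split: if_splits)

lemma G_bound: "n \<in> G l k \<Longrightarrow> n + D (k - 1) \<le> D k"
proof (induction k arbitrary: n)
  case 0 thus ?case by simp
next
  case (Suc k)
  show ?case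
  proof (cases "k = l")
    case True
    hence "n = D l" using Suc by simp
    thus ?thesis using True D_Suc_ge[of l] by simp
  next
    case False
    hence kl: "l < k" using Suc G_lt by (auto split: if_splits)
    then obtain d r where n: "n = d * D k + r" and d: "d \<in> AL k" and r: "r \<in> G l k"
      using Suc.prems False by (auto split: if_splits)
    have "r + D (k-1) \<le> D k" using Suc.IH[OF r] .
    hence rD: "r < D k" using D_pos[of "k-1"] by linarith
    have "d \<le> b k - 2" using d by (auto simp: AL_def)
    hence "(d + 2) * D k \<le> b k * D k" using b_ge8[of k] by (intro mult_right_mono) auto
    hence "n + D k < b k * D k" using n rD by (simp add: algebra_simps)
    thus ?thesis by (simp add: D_Suc)
  qed
qed

lemma G_less: "n \<in> G l k \<Longrightarrow> n < D k"
  using G_bound[of n l k] D_pos[of "k-1"] by linarith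

lemma G_mod: "n \<in> G l k \<Longrightarrow> n mod D (Suc l) = D l"
proof (induction k arbitrary: n)
  case 0 thus ?case by simp
next
  case (Suc k)
  show ?case
  proof (cases "k = l")
    case True
    hence "n = D l" using Suc by simp
    thus ?thesis using D_lt[of l] by simp
  next
    case False
    hence kl: "l < k" using Suc G_lt by (auto split: if_splits)
    then obtain d r where n: "n = d * D k + r" and r: "r \<in> G l k"
      using Suc.prems False by (auto split: if_splits)
    have dv: "D (Suc l) dvd D k" using kl by (intro D_dvd) simp
    have "n mod D (Suc l) = r mod D (Suc l)" using dv n by (metis mod_mult_self4 dvd_def mult.assoc mult.commute)
    thus ?thesis using Suc.IH[OF r] by simp
  qed
qed

lemma G_up: "n \<in> G l k \<Longrightarrow> n \<in> G l (Suc k)"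
proof -
  assume n: "n \<in> G l k"
  hence "l < k" by (rule G_lt)
  moreover have "n = (\<lambda>(d,r). d * D k + r) (0, n)" by simp
  ultimately show ?thesis using n zero_AL[of k] by (auto simp del: G.simps(2) simp: G.simps(2)[of l k] intro!: image_eqI[of n _ "(0,n)"])
qed

lemma G_up': assumes "n \<in> G l k" "k \<le> k'" shows "n \<in> G l k'"
  using assms(2)
proof (induction k' rule: dec_induct)
  case base show ?case using assms(1) .
next
  case (step m) thus ?case using G_up by blast
qed

lemma A_G: "n \<in> A l \<Longrightarrow> \<exists>k\<ge>K. n \<in> G l k"
proof -
  assume "n \<in> A l"
  then obtain k where "n \<in> G l k" by (auto simp: A_def)
  thus ?thesis using G_up'[of n l k "max k K"] by (intro exI[of _ "max k K"]) auto
qed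

lemma A_mod: "n \<in> A l \<Longrightarrow> n mod D (Suc l) = D l"
  using G_mod by (auto simp: A_def)

lemma A_ge: "n \<in> A l \<Longrightarrow> D l \<le> n"
  using A_mod[of n l] by (metis mod_less_eq_dividend)

lemma G_reduce: "n \<in> G l k \<Longrightarrow> l < j \<Longrightarrow> j < k \<Longrightarrow> n mod D (Suc j) \<in> G l (Suc j)"
proof (induction k arbitrary: n)
  case 0 thus ?case by simp
next
  case (Suc k)
  show ?case
  proof (cases "k = j")
    case True
    thus ?thesis using G_less[OF Suc.prems(1)] Suc.prems by simp
  next
    case False
    hence jk: "j < k" using Suc by simp
    hence kl: "l < k" using Suc by simp
    then obtain d r where n: "n = d * D k + r" and r: "r \<in> G l k"
      using Suc.prems(1) kl by (auto split: if_splits)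
    have dv: "D (Suc j) dvd D k" using jk by (intro D_dvd) simp
    have "n mod D (Suc j) = r mod D (Suc j)" using dv n by (metis mod_mult_self4 dvd_def mult.assoc mult.commute)
    thus ?thesis using Suc.IH[OF r Suc.prems(2) jk] by simp
  qed
qed

definition Cj :: "nat \<Rightarrow> nat \<Rightarrow> bool" where
  "Cj j s \<longleftrightarrow> (s + D (j-1) \<le> D j) \<or> (2 * D j \<le> s \<and> s + D j < D (Suc j))"

lemma G_C: "s \<in> G l (Suc j) \<Longrightarrow> l < j \<Longrightarrow> Cj j s"
proof -
  assume s: "s \<in> G l (Suc j)" and lj: "l < j"
  then obtain d r where sd: "s = d * D j + r" and d: "d \<in> AL j" and r: "r \<in> G l j"
    by (auto split: if_splits)
  have rb: "r + D (j-1) \<le> D j" by (rule G_bound[OF r])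
  hence rD: "r < D j" using D_pos[of "j-1"] by linarith
  show ?thesis
  proof (cases "d = 0")
    case True thus ?thesis using sd rb by (simp add: Cj_def)
  next
    case False
    hence d2: "2 \<le> d" "d \<le> b j - 2" using d by (auto simp: AL_def)
    have "2 * D j \<le> d * D j" using d2 by (intro mult_right_mono) auto
    hence c1: "2 * D j \<le> s" using sd by linarith
    have "(d + 2) * D j \<le> b j * D j" using d2 b_ge8[of j] by (intro mult_right_mono) auto
    hence "s + D j < D (Suc j)" using sd rD by (simp add: algebra_simps D_Suc)
    thus ?thesis using c1 by (simp add: Cj_def)
  qed
qed

lemma A_C: "n \<in> A l \<Longrightarrow> l < j \<Longrightarrow> Cj j (n mod D (Suc j))"
proof -
  assume n: "n \<in> A l" and lj: "l < j"
  obtain k where k: "Suc j \<le> k" "n \<in> G l k" using A_G[OF n, of "Suc j"] by blast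
  have "n mod D (Suc j) \<in> G l (Suc j)" using G_reduce[OF k(2) lj] k(1) by simp
  thus ?thesis using G_C lj by blast
qed

lemma modsep:
  fixes n m P s t :: nat and X :: int
  assumes P: "0 < P" and s: "n mod P = s" and t: "m mod P = t"
    and X1: "X \<le> \<bar>int s - int t\<bar>" and X2: "X \<le> int P - \<bar>int s - int t\<bar>"
  shows "X \<le> \<bar>int n - int m\<bar>"
proof -
  define q where "q = int (n div P) - int (m div P)"
  have eq: "int n - int m = (int s - int t) + int P * q"
  proof -
    have "n = P * (n div P) + s" "m = P * (m div P) + t" using s t by (metis mult_div_mod_eq)+
    hence "int n = int P * int (n div P) + int s" "int m = int P * int (m div P) + int t"
      by (metis of_nat_add of_nat_mult)+
    thus ?thesis by (simp add: q_def algebra_simps)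
  qed
  consider "q = 0" | "q \<ge> 1" | "q \<le> -1" by linarith
  thus ?thesis
  proof cases
    case 1 thus ?thesis using eq X1 by simp
  next
    case 2
    hence "int P \<le> int P * q" using P by simp
    thus ?thesis using eq X2 by linarith
  next
    case 3
    hence "int P * q \<le> - int P" using P
      by (metis mult.commute mult_minus1 mult_right_mono of_nat_0_le_iff)
    thus ?thesis using eq X2 by linarith
  qed
qed

lemma A_sep_cross: assumes n: "n \<in> A l" and m: "m \<in> A j" and lj: "l < j"
  shows "int (D (j-1)) \<le> \<bar>int n - int m\<bar>"
proof -
  have C: "Cj j (n mod D (Suc j))" by (rule A_C[OF n lj])
  have t: "m mod D (Suc j) = D j" by (rule A_mod[OF m])
  have P: "0 < D (Suc j)" using D_pos[of "Suc j"] by simp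
  have DD: "D (j-1) \<le> D j" by (rule D_mono) simp
  have DS: "2 * D j \<le> D (Suc j)" using D_Suc_ge[of j] by simp
  define s where "s = n mod D (Suc j)"
  have sl: "s < D (Suc j)" using P by (simp add: s_def)
  show ?thesis
  proof (rule modsep[OF P refl t])
    show "int (D (j-1)) \<le> \<bar>int (n mod D (Suc j)) - int (D j)\<bar>"
      using C DD unfolding Cj_def s_def[symmetric] by auto
    show "int (D (j-1)) \<le> int (D (Suc j)) - \<bar>int (n mod D (Suc j)) - int (D j)\<bar>"
      using C DD DS sl unfolding Cj_def s_def[symmetric] by auto
  qed
qed

lemma A_disj: assumes "n \<in> A l" "n \<in> A j" "l \<noteq> j" shows False
proof -
  { fix l j assume n: "n \<in> A l" "n \<in> A j" and lj: "l < j"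
    have "Cj j (n mod D (Suc j))" by (rule A_C[OF n(1) lj])
    moreover have "n mod D (Suc j) = D j" by (rule A_mod[OF n(2)])
    ultimately have False using D_pos[of "j-1"] D_pos[of j] by (auto simp: Cj_def) }
  thus False using assms by (metis nat_neq_iff)
qed

lemma A_sep_same: assumes n: "n \<in> A l" and m: "m \<in> A l" and nm: "n < m"
  shows "n + D (Suc l) \<le> m"
proof -
  have "n mod D (Suc l) = m mod D (Suc l)" using A_mod[OF n] A_mod[OF m] by simp
  hence "m mod D (Suc l) = n mod D (Suc l)" by simp
  hence "D (Suc l) dvd m - n" using mod_eq_dvd_iff_nat[of n m "D (Suc l)"] nm by simp
  moreover have "0 < m - n" using nm by simp
  ultimately have "D (Suc l) \<le> m - n" by (rule dvd_imp_le)
  thus ?thesis using nm by linarith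
qed

lemma A_sep: assumes n: "n \<in> A l" and m: "m \<in> A j" and nm: "n \<noteq> m"
  shows "int (W (max l j)) \<le> \<bar>int n - int m\<bar>"
proof -
  consider "l = j" | "l < j" | "j < l" by linarith
  thus ?thesis
  proof cases
    case 1
    have "W l \<le> W (Suc (Suc l))" by (rule monoW) simp
    also have "\<dots> \<le> D (Suc l)" by (rule D_geW)
    finally have w: "W l \<le> D (Suc l)" .
    have "int (D (Suc l)) \<le> \<bar>int n - int m\<bar>"
      using A_sep_same[OF n m[unfolded 1[symmetric]]] A_sep_same[OF m[unfolded 1[symmetric]] n] nm by linarith
    thus ?thesis using w 1 by simp
  next
    case 2
    have "W j \<le> D (j-1)" using D_geW[of "j-1"] 2 by simp
    thus ?thesis using A_sep_cross[OF n m 2] 2 by simp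
  next
    case 3
    have "W l \<le> D (l-1)" using D_geW[of "l-1"] 3 by simp
    thus ?thesis using A_sep_cross[OF m n 3] 3 by (simp add: abs_minus_commute)
  qed
qed


lemma AL_sub: "AL k \<subseteq> {..<b k}" by (auto simp: AL_def)
lemma finite_AL: "finite (AL k)" using AL_sub finite_subset by blast

lemma finite_G: "finite (G l k)"
  by (induction k) (auto simp: finite_AL)

lemma inj_dig: "inj_on (\<lambda>(d,r). d * D k + r) (X \<times> G l k)"
proof (rule inj_onI, clarify)
  fix d r d' r' assume r: "r \<in> G l k" and r': "r' \<in> G l k" and eq: "d * D k + r = d' * D k + r'"
  have rl: "r < D k" "r' < D k" using G_less r r' by auto
  have "(d * D k + r) div D k = d" "(d' * D k + r') div D k = d'" using rl by auto
  hence "d = d'" using eq by simp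
  thus "d = d' \<and> r = r'" using eq by simp
qed

lemma card_G_Suc: "l < k \<Longrightarrow> card (G l (Suc k)) = card (AL k) * card (G l k)"
proof -
  assume lk: "l < k"
  have "card (G l (Suc k)) = card ((\<lambda>(d,r). d * D k + r) ` (AL k \<times> G l k))" using lk by simp
  also have "\<dots> = card (AL k \<times> G l k)" by (rule card_image[OF inj_dig])
  also have "\<dots> = card (AL k) * card (G l k)" by (rule card_cartesian_product)
  finally show ?thesis .
qed

lemma card_AL: "card (AL k) = b k - 2"
proof -
  have "AL k = {..<b k} - {1, b k - 1}" by (auto simp: AL_def)
  moreover have "{1, b k - 1} \<subseteq> {..<b k}" using b_ge8[of k] by auto
  moreover have "card {1, b k - 1} = 2" using b_ge8[of k] by simp
  ultimately show ?thesis by (simp add: card_Diff_subset)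
qed

lemma card_G_lower:
  assumes "Suc l \<le> k"
  shows "real (D k) * (1/2 + 1/2^k) \<le> real (card (G l k)) * real (D (Suc l))"
  using assms
proof (induction k rule: dec_induct)
  case base
  have "card (G l (Suc l)) = 1" by simp
  moreover have "(1::real)/2^(Suc l) \<le> 1/2"
  proof -
    have "(1::real) \<le> 2^l" by simp
    hence "(2::real) \<le> 2^(Suc l)" by simp
    thus ?thesis by (simp add: frac_le)
  qed
  hence "1/2 + (1::real)/2^(Suc l) \<le> 1" by linarith
  hence "real (D (Suc l)) * (1/2 + 1/2^(Suc l)) \<le> real (D (Suc l)) * 1"
    by (intro mult_left_mono) auto
  thus ?case using \<open>card (G l (Suc l)) = 1\<close> by simp
next
  case (step k)
  define p :: real where "p = 2^k"
  have p1: "1 \<le> p" by (simp add: p_def)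
  define bb where "bb = real (b k)"
  have "real (2^(k+3)) \<le> bb" using b_ge[of k] unfolding bb_def by (rule of_nat_mono)
  moreover have "real (2^(k+3)) = 8 * p" by (simp add: p_def power_add)
  ultimately have bp: "8 * p \<le> bb" by simp
  have key: "bb * (1/2 + 1/(2*p)) \<le> (bb - 2) * (1/2 + 1/p)"
  proof -
    have "(bb - 2) * (1/2 + 1/p) - bb * (1/2 + 1/(2*p)) = (bb - 2*p - 4) / (2*p)"
    proof -
      have p0: "p \<noteq> 0" using p1 by simp
      show ?thesis using p0 by (simp add: field_simps)
    qed
    also have "\<dots> \<ge> 0" by (rule divide_nonneg_pos) (use bp p1 in auto)
    finally show ?thesis by simp
  qed
  have lk: "l < k" using step by simp
  have cG: "real (card (G l (Suc k))) = (bb - 2) * real (card (G l k))"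
    using card_G_Suc[OF lk] card_AL[of k] b_ge8[of k] by (simp add: bb_def of_nat_diff)
  have "real (D (Suc k)) * (1/2 + 1/2^(Suc k)) = real (D k) * (bb * (1/2 + 1/(2*p)))"
    by (simp add: D_Suc bb_def p_def algebra_simps)
  also have "\<dots> \<le> real (D k) * ((bb - 2) * (1/2 + 1/p))"
    by (rule mult_left_mono[OF key]) simp
  also have "\<dots> = (bb - 2) * (real (D k) * (1/2 + 1/2^k))" by (simp add: p_def algebra_simps)
  also have "\<dots> \<le> (bb - 2) * (real (card (G l k)) * real (D (Suc l)))"
    using step.IH bp p1 by (intro mult_left_mono) auto
  also have "\<dots> = real (card (G l (Suc k))) * real (D (Suc l))" using cG by simp
  finally show ?case .
qed

lemma card_G_half: "l < k \<Longrightarrow> real (D k) \<le> 2 * real (D (Suc l)) * real (card (G l k))"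
proof -
  assume "l < k"
  hence h: "real (D k) * (1/2 + 1/2^k) \<le> real (card (G l k)) * real (D (Suc l))"
    using card_G_lower by simp
  have e1: "real (D k) * (1/2 + 1/2^k) = real (D k)/2 + real (D k)/2^k" by (simp add: algebra_simps)
  have e2: "0 \<le> real (D k)/2^k" by simp
  have "real (D k) / 2 \<le> real (card (G l k)) * real (D (Suc l))" using h e1 e2 by linarith
  hence "real (D k) \<le> 2 * (real (card (G l k)) * real (D (Suc l)))" by linarith
  thus ?thesis by (simp add: algebra_simps)
qed

lemma G_sub_A: "G l k \<subseteq> A l" by (auto simp: A_def)

lemma A_density:
  assumes N: "D (Suc l) \<le> N"
  shows "real (N+1) / (8 * real (D (Suc l))) \<le> real (card {n. n \<le> N \<and> n \<in> A l})"
proof -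
  have ex: "\<exists>k. N < D k" using D_ge_pow[of N] less_exp[of N] by (metis le_less_trans less_le_trans)
  define K0 where "K0 = (LEAST k. N < D k)"
  have K0: "N < D K0" using LeastI_ex[OF ex] by (simp add: K0_def)
  have K0min: "k < K0 \<Longrightarrow> D k \<le> N" for k using not_less_Least[of k "\<lambda>k. N < D k"] by (simp add: K0_def)
  have "Suc l < K0"
  proof (rule ccontr)
    assume "\<not> Suc l < K0"
    hence "D K0 \<le> D (Suc l)" by (intro D_mono) simp
    thus False using K0 N by linarith
  qed
  then obtain k where k: "K0 = Suc k" "Suc l \<le> k" by (cases K0) auto
  have lk: "l < k" using k by simp
  have Dk: "D k \<le> N" using K0min[of k] k by simp
  have NS: "N < b k * D k" using K0 k by (simp add: D_Suc)
  define q where "q = N div D k"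
  have q1: "1 \<le> q"
  proof -
    have "D k div D k \<le> N div D k" by (rule div_le_mono[OF Dk])
    thus ?thesis by (simp add: q_def)
  qed
  have qb: "q < b k" using NS by (simp add: q_def div_less_iff_less_mult)
  have qD: "q * D k \<le> N" by (simp add: q_def)
  have Nq: "N + 1 \<le> 2 * q * D k"
  proof -
    have "N = q * D k + N mod D k" using div_mult_mod_eq[of N "D k"] by (simp add: q_def)
    moreover have "N mod D k < D k" by simp
    ultimately have "N + 1 \<le> q * D k + D k" by linarith
    hence "N + 1 \<le> (q + 1) * D k" by simp
    also have "\<dots> \<le> 2 * q * D k" using q1 by (intro mult_right_mono) auto
    finally show ?thesis .
  qed
  define Q where "Q = {d \<in> AL k. d < q}"
  define S where "S = (\<lambda>(d,r). d * D k + r) ` (Q \<times> G l k)"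
  have SA: "S \<subseteq> {n. n \<le> N \<and> n \<in> A l}"
  proof
    fix n assume "n \<in> S"
    then obtain d r where n: "n = d * D k + r" and d: "d \<in> AL k" "d < q" and r: "r \<in> G l k"
      by (auto simp: S_def Q_def)
    have "n \<in> G l (Suc k)" using lk n d r by auto
    hence nA: "n \<in> A l" using G_sub_A by blast
    have "r < D k" using G_less[OF r] .
    hence "n < (d + 1) * D k" using n by simp
    also have "\<dots> \<le> q * D k" using d by (intro mult_right_mono) auto
    finally show "n \<in> {n. n \<le> N \<and> n \<in> A l}" using qD nA by simp
  qed
  have cS: "card S = card Q * card (G l k)"
  proof -
    have "inj_on (\<lambda>(d,r). d * D k + r) (Q \<times> G l k)"
      by (rule inj_on_subset[OF inj_dig]) (auto simp: Q_def)
    hence "card S = card (Q \<times> G l k)" by (simp add: S_def card_image)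
    thus ?thesis by (simp add: card_cartesian_product)
  qed
  have cQ: "real q \<le> 2 * real (card Q)"
  proof -
    have sub: "{..<q} - {1} \<subseteq> Q" using qb by (auto simp: Q_def AL_def)
    have fin: "finite Q" by (simp add: Q_def)
    have "card ({..<q} - {1}) \<le> card Q" by (rule card_mono[OF fin sub])
    moreover have "q \<le> 2 * card ({..<q} - {1})"
    proof (cases "q = 1")
      case True thus ?thesis by simp
    next
      case False
      hence "1 \<in> {..<q}" using q1 by auto
      hence "card ({..<q} - {1}) = q - 1" by simp
      thus ?thesis using q1 False by simp
    qed
    ultimately show ?thesis by linarith
  qed
  have cG: "real (D k) \<le> 2 * real (D (Suc l)) * real (card (G l k))" by (rule card_G_half[OF lk])
  have Dl: "0 < real (D (Suc l))" by simp
  have "real (N+1) \<le> 2 * real q * real (D k)" using Nq by (metis of_nat_le_iff of_nat_mult of_nat_numeral)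
  also have "\<dots> \<le> 2 * (2 * real (card Q)) * (2 * real (D (Suc l)) * real (card (G l k)))"
    using cQ cG by (intro mult_mono) auto
  also have "\<dots> = 8 * real (D (Suc l)) * real (card S)" using cS by simp
  finally have "real (N+1) / (8 * real (D (Suc l))) \<le> real (card S)" using Dl by (simp add: divide_le_eq mult.commute)
  also have "real (card S) \<le> real (card {n. n \<le> N \<and> n \<in> A l})"
    by (intro of_nat_mono card_mono[OF _ SA]) auto
  finally show ?thesis .
qed

end


definition sb :: "(nat \<Rightarrow> complex) \<Rightarrow> nat" where "sb y = (LEAST B. \<forall>i\<ge>B. y i = 0)"

lemma sb: assumes "fsupp y" "i \<ge> sb y" shows "y i = 0"
proof -
  obtain B where "\<forall>i\<ge>B. y i = 0" using assms(1) fsupp_def by auto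
  hence "\<forall>i\<ge>sb y. y i = 0" unfolding sb_def by (rule LeastI)
  thus ?thesis using assms(2) by blast
qed

locale MAIN = WD +
  assumes sumk: "\<And>k. 3 \<le> k \<Longrightarrow> summable (\<lambda>n. 1 / \<omega> (k * 2^n))"
begin

definition tau :: "(nat \<Rightarrow> complex) \<Rightarrow> nat \<Rightarrow> real" where
  "tau y M = (\<Sum>i\<in>{3..<sb y}. cmod (y i) * sqrt (\<Sum>n. 1 / \<omega> (i * 2^(n + M))))"

lemma tail0: "summable f \<Longrightarrow> (\<lambda>M. \<Sum>n. f (n + M)) \<longlonglongrightarrow> (0::real)"
proof (rule LIMSEQ_I)
  fix r :: real assume "summable f" "0 < r"
  then obtain N where "\<forall>n\<ge>N. norm (\<Sum>i. f (i + n)) < r" using suminf_exist_split by blast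
  thus "\<exists>no. \<forall>n\<ge>no. norm ((\<Sum>i. f (i + n)) - 0) < r" by auto
qed

lemma tau_lim: "(\<lambda>M. tau y M) \<longlonglongrightarrow> 0"
proof -
  have h: "(\<lambda>M. cmod (y i) * sqrt (\<Sum>n. 1 / \<omega> (i * 2^(n + M)))) \<longlonglongrightarrow> cmod (y i) * sqrt 0"
    if "i \<in> {3..<sb y}" for i
  proof (intro tendsto_mult_left tendsto_real_sqrt)
    have "summable (\<lambda>n. 1 / \<omega> (i * 2^n))" using sumk that by auto
    thus "(\<lambda>M. \<Sum>n. 1 / \<omega> (i * 2^(n + M))) \<longlonglongrightarrow> 0" using tail0[of "\<lambda>n. 1 / \<omega> (i * 2^n)"] by simp
  qed
  have "(\<lambda>M. \<Sum>i\<in>{3..<sb y}. cmod (y i) * sqrt (\<Sum>n. 1 / \<omega> (i * 2^(n + M)))) \<longlonglongrightarrow> (\<Sum>i\<in>{3..<sb y}. cmod (y i) * sqrt 0)"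
    by (rule tendsto_sum[OF h])
  thus ?thesis by (simp add: tau_def)
qed

lemma tau_nonneg: "0 \<le> tau y M"
proof -
  have "0 \<le> (\<Sum>n. 1 / \<omega> (i * 2^(n + M)))" if "3 \<le> i" for i
  proof (rule suminf_nonneg)
    show "summable (\<lambda>n. 1 / \<omega> (i * 2^(n + M)))" using sumk[OF that] summable_iff_shift[of "\<lambda>n. 1 / \<omega> (i * 2^n)" M] by simp
    fix n have "1 \<le> i * 2^(n+M)" using that by simp
    thus "0 \<le> 1 / \<omega> (i * 2^(n + M))" using pos by (simp add: less_imp_le)
  qed
  thus ?thesis unfolding tau_def by (auto intro!: sum_nonneg)
qed

lemma KS:
  assumes y: "supp3 y" "fsupp y" and GM: "\<forall>k\<in>G. M \<le> k" and A: "finite A" "A \<subseteq> {1..}"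
  shows "Lp \<omega> (\<lambda>t. \<Sum>k\<in>G \<inter> {..<t}. sh k y t) A \<le> tau y M"
proof -
  define B where "B = sb y"
  define E :: "nat \<Rightarrow> nat \<Rightarrow> complex" where "E i t = (if \<exists>k\<in>G. t = i * 2^k then 1 else 0)" for i t
  have sh_eq: "sh k y t = (\<Sum>i\<in>{3..<B}. y i * (if t = i * 2^k then 1 else 0))" for k t
  proof (cases "2^k dvd t")
    case True
    then obtain q0 where "t = 2^k * q0" by (rule dvdE)
    then obtain q where q: "t = q * 2^k" by (simp add: mult.commute)
    have "(\<Sum>i\<in>{3..<B}. y i * (if t = i * 2^k then 1 else 0)) = (\<Sum>i\<in>{3..<B}. if i = q then y q else 0)"
      by (rule sum.cong) (auto simp: q)
    also have "\<dots> = (if q \<in> {3..<B} then y q else 0)" by (simp add: sum.delta')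
    also have "\<dots> = y q" using y sb[of y q] by (auto simp: B_def supp3_def)
    also have "\<dots> = sh k y t" by (simp add: sh_def q)
    finally show ?thesis ..
  next
    case False
    hence "\<And>i. t \<noteq> i * 2^k" by auto
    thus ?thesis using False by (simp add: sh_def)
  qed
  have Esum: "(\<Sum>k\<in>G \<inter> {..<t}. (if t = i * 2^k then 1 else 0)) = E i t" if i3: "3 \<le> i" for i t
  proof (cases "\<exists>k\<in>G. t = i * 2^k")
    case True
    then obtain k0 where k0: "k0 \<in> G" "t = i * 2^k0" by blast
    have "k0 < 2^k0" by (rule less_exp)
    also have "\<dots> \<le> i * 2^k0" using i3 by simp
    finally have k0t: "k0 < t" using k0 by simp
    have eqk: "(t = i * 2^k) \<longleftrightarrow> (k = k0)" for k
    proof -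
      have "(t = i * 2^k) \<longleftrightarrow> (i * 2^k0 = i * 2^k)" using k0 by auto
      also have "\<dots> \<longleftrightarrow> ((2::nat)^k0 = 2^k)" using i3 by simp
      also have "\<dots> \<longleftrightarrow> (k = k0)" by auto
      finally show ?thesis .
    qed
    have "(\<Sum>k\<in>G \<inter> {..<t}. (if t = i * 2^k then 1 else 0)) = (\<Sum>k\<in>G \<inter> {..<t}. (if k = k0 then 1 else (0::complex)))"
      by (simp only: eqk)
    also have "\<dots> = (if k0 \<in> G \<inter> {..<t} then 1 else 0)" by (rule sum.delta) simp
    also have "\<dots> = 1" using k0 k0t by simp
    finally show ?thesis using True by (simp add: E_def)
  next
    case False
    hence "\<forall>k\<in>G \<inter> {..<t}. (if t = i * 2^k then 1 else 0) = (0::complex)" by auto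
    hence "(\<Sum>k\<in>G \<inter> {..<t}. (if t = i * 2^k then 1 else 0)) = (0::complex)" by (rule sum.neutral)
    thus ?thesis using False by (simp add: E_def)
  qed
  have U_eq: "(\<Sum>k\<in>G \<inter> {..<t}. sh k y t) = (\<Sum>i\<in>{3..<B}. y i * E i t)" for t
  proof -
    have "(\<Sum>k\<in>G \<inter> {..<t}. sh k y t) = (\<Sum>k\<in>G \<inter> {..<t}. \<Sum>i\<in>{3..<B}. y i * (if t = i * 2^k then 1 else 0))"
      by (simp add: sh_eq)
    also have "\<dots> = (\<Sum>i\<in>{3..<B}. \<Sum>k\<in>G \<inter> {..<t}. y i * (if t = i * 2^k then 1 else 0))"
      by (rule sum.swap)
    also have "\<dots> = (\<Sum>i\<in>{3..<B}. y i * E i t)"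
      by (rule sum.cong) (auto simp: sum_distrib_left[symmetric] Esum)
    finally show ?thesis .
  qed
  have LE: "Lp \<omega> (E i) A \<le> sqrt (\<Sum>n. 1 / \<omega> (i * 2^(n + M)))" if i3: "3 \<le> i" for i
  proof -
    define f where "f = (\<lambda>n. 1 / \<omega> (i * 2^(n + M)))"
    have sf: "summable f" using sumk[OF i3] summable_iff_shift[of "\<lambda>n. 1 / \<omega> (i * 2^n)" M] by (simp add: f_def)
    have f0: "0 \<le> f n" for n
    proof -
      have "1 \<le> i * 2^(n+M)" using i3 by simp
      thus ?thesis using pos by (simp add: f_def less_imp_le)
    qed
    define KA where "KA = {k\<in>G. i * 2^k \<in> A}"
    have injk: "inj (\<lambda>k. i * 2^k)"
    proof (rule injI)
      fix x x' assume "i * 2^x = i * (2::nat)^x'"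
      hence "(2::nat)^x = 2^x'" using i3 by simp
      thus "x = x'" by simp
    qed
    have fKA: "finite KA"
    proof -
      have "(\<lambda>k. i * 2^k) ` KA \<subseteq> A" by (auto simp: KA_def)
      hence "finite ((\<lambda>k. i * 2^k) ` KA)" using A finite_subset by blast
      thus ?thesis using injk by (simp add: finite_image_iff inj_on_subset)
    qed
    have "(Lp \<omega> (E i) A)\<^sup>2 = (\<Sum>t\<in>A. (cmod (E i t))\<^sup>2 / \<omega> t)" by (rule Lp_sq[OF A(2)])
    also have "\<dots> = (\<Sum>t\<in>A. if t \<in> (\<lambda>k. i * 2^k) ` G then 1 / \<omega> t else 0)"
      by (rule sum.cong) (auto simp: E_def)
    also have "\<dots> = (\<Sum>t\<in>A \<inter> (\<lambda>k. i * 2^k) ` G. 1 / \<omega> t)" by (rule sum.inter_restrict[symmetric, OF A(1)])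
    also have "A \<inter> (\<lambda>k. i * 2^k) ` G = (\<lambda>k. i * 2^k) ` KA" by (auto simp: KA_def)
    also have "(\<Sum>t\<in>(\<lambda>k. i * 2^k) ` KA. 1 / \<omega> t) = (\<Sum>k\<in>KA. 1 / \<omega> (i * 2^k))"
      using sum.reindex[OF inj_on_subset[OF injk subset_UNIV], of "\<lambda>t. 1 / \<omega> t"] by (simp add: o_def)
    also have "\<dots> = (\<Sum>n\<in>(\<lambda>k. k - M) ` KA. f n)"
    proof -
      have inj: "inj_on (\<lambda>k. k - M) KA"
      proof (rule inj_onI)
        fix x x' assume "x \<in> KA" "x' \<in> KA" "x - M = x' - M"
        moreover have "M \<le> x" "M \<le> x'" using GM \<open>x \<in> KA\<close> \<open>x' \<in> KA\<close> by (auto simp: KA_def)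
        ultimately show "x = x'" by linarith
      qed
      have "(\<Sum>n\<in>(\<lambda>k. k - M) ` KA. f n) = (\<Sum>k\<in>KA. f (k - M))" using sum.reindex[OF inj, of f] by (simp add: o_def)
      also have "\<dots> = (\<Sum>k\<in>KA. 1 / \<omega> (i * 2^k))"
        by (rule sum.cong) (use GM in \<open>auto simp: f_def KA_def\<close>)
      finally show ?thesis ..
    qed
    also have "\<dots> \<le> suminf f" by (rule sum_le_suminf[OF sf]) (auto simp: fKA f0)
    finally show ?thesis unfolding f_def by (rule real_le_rsqrt)
  qed
  have "Lp \<omega> (\<lambda>t. \<Sum>k\<in>G \<inter> {..<t}. sh k y t) A = Lp \<omega> (\<lambda>t. \<Sum>i\<in>{3..<B}. y i * E i t) A"
    by (simp add: U_eq)
  also have "\<dots> \<le> (\<Sum>i\<in>{3..<B}. Lp \<omega> (\<lambda>t. y i * E i t) A)" by (rule Lp_sum[OF A(2)])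
  also have "\<dots> = (\<Sum>i\<in>{3..<B}. cmod (y i) * Lp \<omega> (E i) A)" by (simp add: Lp_scale)
  also have "\<dots> \<le> tau y M" unfolding tau_def B_def
    by (rule sum_mono, rule mult_left_mono) (auto intro!: LE)
  finally show ?thesis .
qed

end


context MAIN begin

definition ycode :: "nat \<Rightarrow> nat \<Rightarrow> complex" where "ycode k = Phi (from_nat k)"
definition bnd :: "(nat \<Rightarrow> complex) \<Rightarrow> real" where "bnd y = (\<Sum>i<sb y. cmod (y i))"

lemma bnd: assumes "fsupp y" shows "cmod (y i) \<le> bnd y"
proof (cases "i < sb y")
  case True thus ?thesis unfolding bnd_def by (intro member_le_sum) auto
next
  case False thus ?thesis using sb[OF assms] by (simp add: bnd_def sum_nonneg)
qed

definition z :: "nat \<Rightarrow> nat \<Rightarrow> complex" where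
  "z l = (if bnd (ycode (fst (prod_decode l))) \<le> real l then ycode (fst (prod_decode l)) else (\<lambda>_. 0))"

lemma ycode_props: "killed (ycode k) \<and> fsupp (ycode k) \<and> supp3 (ycode k)"
  by (simp add: ycode_def Phi_props)

lemma z_props: "killed (z l)" "fsupp (z l)" "supp3 (z l)"
  using ycode_props[of "fst (prod_decode l)"]
  by (auto simp: z_def killed_zero fsupp_def supp3_def)

lemma z_bound: "cmod (z l i) \<le> real l"
proof (cases "bnd (ycode (fst (prod_decode l))) \<le> real l")
  case True thus ?thesis using bnd[of "ycode (fst (prod_decode l))" i] ycode_props by (simp add: z_def)
qed (simp add: z_def)

lemma z_often: "\<exists>l\<ge>L. z l = ycode k"
proof -
  define l where "l = prod_encode (k, L + nat \<lceil>bnd (ycode k)\<rceil>)"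
  have pd: "prod_decode l = (k, L + nat \<lceil>bnd (ycode k)\<rceil>)" by (simp add: l_def)
  have le: "L + nat \<lceil>bnd (ycode k)\<rceil> \<le> l" unfolding l_def by (rule le_prod_encode_2)
  have "bnd (ycode k) \<le> real (nat \<lceil>bnd (ycode k)\<rceil>)" by linarith
  also have "\<dots> \<le> real l" using le by linarith
  finally have "z l = ycode k" by (simp add: z_def pd)
  moreover have "L \<le> l" using le by simp
  ultimately show ?thesis by blast
qed

definition Kt :: "nat \<Rightarrow> nat" where "Kt l = (SOME K. \<forall>K'\<ge>K. Tn K' (z l) = (\<lambda>_. 0))"

lemma Kt: "Kt l \<le> K' \<Longrightarrow> Tn K' (z l) = (\<lambda>_. 0)"
proof -
  have "\<exists>K. \<forall>K'\<ge>K. Tn K' (z l) = (\<lambda>_. 0)" using z_props(1)[of l] by (simp add: killed_def)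
  from someI_ex[OF this] show "Kt l \<le> K' \<Longrightarrow> Tn K' (z l) = (\<lambda>_. 0)" unfolding Kt_def by blast
qed

definition Mt :: "nat \<Rightarrow> nat" where
  "Mt j = (SOME M. \<forall>M'\<ge>M. \<forall>l'\<in>{..j}. tau (z l') M' \<le> (1/4)^j)"

lemma Mt: "Mt j \<le> M' \<Longrightarrow> l' \<le> j \<Longrightarrow> tau (z l') M' \<le> (1/4)^j"
proof -
  have "\<forall>l'\<in>{..j}. eventually (\<lambda>M. tau (z l') M < (1/4)^j) sequentially"
  proof
    fix l' show "eventually (\<lambda>M. tau (z l') M < (1/4)^j) sequentially"
      using order_tendstoD(2)[OF tau_lim[of "z l'"], of "(1/4)^j"] by simp
  qed
  hence "eventually (\<lambda>M. \<forall>l'\<in>{..j}. tau (z l') M < (1/4)^j) sequentially"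
    by (rule eventually_ball_finite[rotated]) simp
  then obtain N where "\<forall>M\<ge>N. \<forall>l'\<in>{..j}. tau (z l') M < (1/4)^j"
    unfolding eventually_sequentially by blast
  hence "\<exists>M. \<forall>M'\<ge>M. \<forall>l'\<in>{..j}. tau (z l') M' \<le> (1/4)^j" by (meson less_imp_le)
  from someI_ex[OF this] show "Mt j \<le> M' \<Longrightarrow> l' \<le> j \<Longrightarrow> tau (z l') M' \<le> (1/4)^j"
    unfolding Mt_def by blast
qed

definition Wf :: "nat \<Rightarrow> nat" where "Wf j = (\<Sum>i\<le>j. Mt i + Kt i)"

lemma Wf_mono: "i \<le> j \<Longrightarrow> Wf i \<le> Wf j"
  unfolding Wf_def by (rule sum_mono2) auto

lemma Mt_Wf: "Mt j \<le> Wf j" and Kt_Wf: "Kt j \<le> Wf j"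
proof -
  have "Mt j + Kt j \<le> Wf j" unfolding Wf_def by (rule member_le_sum) auto
  thus "Mt j \<le> Wf j" "Kt j \<le> Wf j" by auto
qed

sublocale S: SETS Wf by unfold_locales (rule Wf_mono)

definition lev :: "nat \<Rightarrow> nat" where "lev n = (THE l. n \<in> S.A l)"

lemma lev: "n \<in> S.A l \<Longrightarrow> lev n = l"
  unfolding lev_def using S.A_disj by blast

definition w :: "nat \<Rightarrow> nat \<Rightarrow> complex" where
  "w n = (if \<exists>l. n \<in> S.A l then z (lev n) else (\<lambda>_. 0))"

lemma w_A: "n \<in> S.A l \<Longrightarrow> w n = z l"
  using lev by (auto simp: w_def)

lemma w_props: "fsupp (w n)" "supp3 (w n)"
  using z_props by (auto simp: w_def fsupp_def supp3_def)

lemma lev_le: "n \<in> S.A l \<Longrightarrow> l \<le> n"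
proof -
  assume n: "n \<in> S.A l"
  have "l < 2^l" by (rule less_exp)
  also have "\<dots> \<le> S.D l" by (rule S.D_ge_pow)
  also have "\<dots> \<le> n" by (rule S.A_ge[OF n])
  finally show ?thesis by simp
qed

lemma w_bound: "cmod (w n i) \<le> real n"
proof (cases "\<exists>l. n \<in> S.A l")
  case True
  then obtain l where l: "n \<in> S.A l" by blast
  have "cmod (w n i) \<le> real l" using z_bound w_A[OF l] by simp
  also have "\<dots> \<le> real n" using lev_le[OF l] by simp
  finally show ?thesis .
qed (simp add: w_def)

lemma zero_notin_A: "0 \<notin> S.A l"
  using S.A_ge[of 0 l] S.D_pos'[of l] by auto

lemma w0: "w 0 = (\<lambda>_. 0)"
  using zero_notin_A by (auto simp: w_def)

lemma split_sum: fixes f :: "nat \<Rightarrow> 'a::comm_monoid_add" and a b :: nat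
  shows "a \<le> b \<Longrightarrow> (\<Sum>n<b. f n) = (\<Sum>n<a. f n) + (\<Sum>n\<in>{a..<b}. f n)"
  using sum.atLeastLessThan_concat[of 0 a b f] by (simp add: atLeast0LessThan)

definition cc :: "nat \<Rightarrow> complex" where "cc t = (\<Sum>n<t. sh n (w n) t)"

lemma sh_w_zero: "t \<le> n \<Longrightarrow> sh n (w n) t = 0"
  using sh_supp3_lt[OF w_props(2)] by (meson not_le)

lemma cc_Kb: "i < Kb \<Longrightarrow> cc i = (\<Sum>n<Kb. sh n (w n) i)"
proof -
  assume "i < Kb"
  hence "(\<Sum>n<Kb. sh n (w n) i) = (\<Sum>n<i. sh n (w n) i) + (\<Sum>n\<in>{i..<Kb}. sh n (w n) i)"
    by (intro split_sum) simp
  moreover have "(\<Sum>n\<in>{i..<Kb}. sh n (w n) i) = 0" by (rule sum.neutral) (auto intro: sh_w_zero)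
  ultimately show ?thesis by (simp add: cc_def)
qed

lemma Tn_cc: assumes Kb: "2^m * t < Kb" shows "Tn m cc t = (\<Sum>n<Kb. Tn m (sh n (w n)) t)"
proof -
  have "Tn m cc t = (\<Sum>i\<in>Pre m t. cc i)" by (rule Tn_Pre)
  also have "\<dots> = (\<Sum>i\<in>Pre m t. \<Sum>n<Kb. sh n (w n) i)"
    by (rule sum.cong[OF refl], rule cc_Kb) (use Pre_le Kb in fastforce)
  also have "\<dots> = (\<Sum>n<Kb. \<Sum>i\<in>Pre m t. sh n (w n) i)" by (rule sum.swap)
  also have "\<dots> = (\<Sum>n<Kb. Tn m (sh n (w n)) t)" by (simp add: Tn_Pre)
  finally show ?thesis .
qed

definition Gs :: "nat \<Rightarrow> nat \<Rightarrow> nat set" where "Gs m l' = {k. 1 \<le> k \<and> m + k \<in> S.A l'}"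

lemma w_split: "m + k < L \<Longrightarrow> w (m+k) = (\<lambda>i. \<Sum>l'<L. if m + k \<in> S.A l' then z l' i else 0)"
proof
  fix i assume mk: "m + k < L"
  show "w (m+k) i = (\<Sum>l'<L. if m + k \<in> S.A l' then z l' i else 0)"
  proof (cases "\<exists>l. m + k \<in> S.A l")
    case True
    then obtain l where l: "m + k \<in> S.A l" by blast
    have lL: "l < L" using lev_le[OF l] mk by simp
    have eqA: "(m + k \<in> S.A l') = (l' = l)" for l' using l S.A_disj by blast
    have "(\<Sum>l'<L. if m + k \<in> S.A l' then z l' i else 0) = (\<Sum>l'<L. if l' = l then z l' i else 0)"
      by (simp only: eqA)
    also have "\<dots> = z l i" using lL by (simp add: sum.delta)
    finally show ?thesis using w_A[OF l] by simp
  next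
    case False thus ?thesis by (simp add: w_def)
  qed
qed

lemma Tn_cc_split:
  assumes van: "\<And>n. n < m \<Longrightarrow> Tn (m-n) (w n) = (\<lambda>_. 0)" and L: "m + t < L"
  shows "Tn m cc t = w m t + (\<Sum>l'<L. \<Sum>k\<in>Gs m l' \<inter> {..<t}. sh k (z l') t)"
proof -
  define Kb where "Kb = 2^m * t + m + t + 1"
  have Kb: "2^m * t < Kb" "m + t < Kb" by (auto simp: Kb_def)
  have trm: "Tn m (sh n (w n)) t = (if n < m then 0 else sh (n - m) (w n) t)" for n
  proof (cases "n < m")
    case True
    hence "Tn m (sh n (w n)) = Tn (m-n) (w n)" using Tn_sh_ge[OF w_props(2)] by simp
    thus ?thesis using van True by simp
  next
    case False thus ?thesis using Tn_sh[OF w_props(2)] by simp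
  qed
  have "Tn m cc t = (\<Sum>n<Kb. if n < m then 0 else sh (n - m) (w n) t)" using Tn_cc[OF Kb(1)] trm by simp
  also have "\<dots> = (\<Sum>n\<in>{m..<Kb}. sh (n - m) (w n) t)"
    using split_sum[of m Kb "\<lambda>n. if n < m then 0 else sh (n - m) (w n) t"] Kb by simp
  also have "\<dots> = (\<Sum>k\<in>{0..<Kb-m}. sh k (w (m+k)) t)"
    by (rule sum.reindex_bij_witness[of _ "\<lambda>k. m + k" "\<lambda>n. n - m"]) (use Kb in auto)
  also have "\<dots> = (\<Sum>k\<in>{0..<t}. sh k (w (m+k)) t)"
  proof -
    have "(\<Sum>k\<in>{t..<Kb-m}. sh k (w (m+k)) t) = 0"
    proof (rule sum.neutral, rule ballI)
      fix k assume "k \<in> {t..<Kb-m}"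
      hence "t \<le> k" by simp
      thus "sh k (w (m+k)) t = 0" using sh_supp3_lt[OF w_props(2), of k "m+k" t] by linarith
    qed
    moreover have "(\<Sum>k<Kb-m. sh k (w (m+k)) t) = (\<Sum>k<t. sh k (w (m+k)) t) + (\<Sum>k\<in>{t..<Kb-m}. sh k (w (m+k)) t)"
      using Kb by (intro split_sum) simp
    ultimately show ?thesis by (simp add: atLeast0LessThan)
  qed
  also have "\<dots> = w m t + (\<Sum>k\<in>{1..<t}. sh k (w (m+k)) t)"
  proof (cases t)
    case 0 thus ?thesis using sh_w_zero[of 0 m] by (simp add: sh_def)
  next
    case (Suc t')
    have "{0..<t} = insert 0 {1..<t}" using Suc by auto
    thus ?thesis by simp
  qed
  also have "(\<Sum>k\<in>{1..<t}. sh k (w (m+k)) t) = (\<Sum>l'<L. \<Sum>k\<in>Gs m l' \<inter> {..<t}. sh k (z l') t)"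
  proof -
    have "(\<Sum>k\<in>{1..<t}. sh k (w (m+k)) t) = (\<Sum>k\<in>{1..<t}. \<Sum>l'<L. if m + k \<in> S.A l' then sh k (z l') t else 0)"
    proof (rule sum.cong[OF refl])
      fix k assume "k \<in> {1..<t}"
      hence mk: "m + k < L" using L by simp
      have "sh k (w (m+k)) t = sh k (\<lambda>i. \<Sum>l'<L. if m + k \<in> S.A l' then z l' i else 0) t"
        by (simp add: w_split[OF mk])
      also have "\<dots> = (\<Sum>l'<L. if m + k \<in> S.A l' then sh k (z l') t else 0)"
        by (cases "2^k dvd t") (simp_all add: sh_def cong: if_cong)
      finally show "sh k (w (m+k)) t = (\<Sum>l'<L. if m + k \<in> S.A l' then sh k (z l') t else 0)" .
    qed
    also have "\<dots> = (\<Sum>l'<L. \<Sum>k\<in>{1..<t}. if m + k \<in> S.A l' then sh k (z l') t else 0)" by (rule sum.swap)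
    also have "\<dots> = (\<Sum>l'<L. \<Sum>k\<in>Gs m l' \<inter> {..<t}. sh k (z l') t)"
    proof (rule sum.cong[OF refl])
      fix l'
      have "(\<Sum>k\<in>{1..<t}. if m + k \<in> S.A l' then sh k (z l') t else 0) = (\<Sum>k\<in>{k\<in>{1..<t}. m + k \<in> S.A l'}. sh k (z l') t)"
        by (rule sum.inter_filter[symmetric]) simp
      also have "{k\<in>{1..<t}. m + k \<in> S.A l'} = Gs m l' \<inter> {..<t}" by (auto simp: Gs_def)
      finally show "(\<Sum>k\<in>{1..<t}. if m + k \<in> S.A l' then sh k (z l') t else 0) = (\<Sum>k\<in>Gs m l' \<inter> {..<t}. sh k (z l') t)" .
    qed
    finally show ?thesis .
  qed
  finally show ?thesis .
qed

end


lemma geom2: "(\<Sum>i<n. (1/2::real)^i) \<le> 2"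
proof -
  have "(\<Sum>i<n. (1/2::real)^i) = 2 - 2 * (1/2)^n" by (induction n) simp_all
  thus ?thesis by simp
qed

lemma sumq: "(\<Sum>l'<L. (1/4::real)^(max l l')) \<le> 2 * (1/2)^l"
proof -
  have "(1/4::real)^(max l l') \<le> (1/2)^l * (1/2)^l'" for l'
  proof -
    have "(1/4::real)^(max l l') = (1/2)^(max l l') * (1/2)^(max l l')"
      by (simp add: power_mult_distrib[symmetric])
    also have "\<dots> \<le> (1/2)^l * (1/2)^l'"
      by (intro mult_mono power_decreasing) auto
    finally show ?thesis .
  qed
  hence "(\<Sum>l'<L. (1/4::real)^(max l l')) \<le> (\<Sum>l'<L. (1/2)^l * (1/2)^l')" by (intro sum_mono) auto
  also have "\<dots> = (1/2)^l * (\<Sum>l'<L. (1/2)^l')" by (simp add: sum_distrib_left)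
  also have "\<dots> \<le> (1/2)^l * 2" by (intro mult_left_mono geom2) simp
  finally show ?thesis by simp
qed

context MAIN begin

lemma Lp_cong: "(\<And>i. i \<in> A \<Longrightarrow> f i = g i) \<Longrightarrow> Lp \<omega> f A = Lp \<omega> g A"
  unfolding Lp_def by (rule L2_set_cong) auto

lemma Err:
  assumes van: "\<And>n. n < m \<Longrightarrow> Tn (m-n) (w n) = (\<lambda>_. 0)"
    and sep: "\<And>l' k. k \<in> Gs m l' \<Longrightarrow> Wf (max l l') \<le> k"
  shows "Lp \<omega> (\<lambda>t. Tn m cc t - w m t) {1..<K} \<le> 2 * (1/2)^l"
proof -
  define L where "L = m + K + 1"
  define V where "V l' t = (\<Sum>k\<in>Gs m l' \<inter> {..<t}. sh k (z l') t)" for l' t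
  have "Lp \<omega> (\<lambda>t. Tn m cc t - w m t) {1..<K} = Lp \<omega> (\<lambda>t. \<Sum>l'<L. V l' t) {1..<K}"
  proof (rule Lp_cong)
    fix t assume "t \<in> {1..<K}"
    hence "m + t < L" by (simp add: L_def)
    thus "Tn m cc t - w m t = (\<Sum>l'<L. V l' t)" using Tn_cc_split[OF van] by (simp add: V_def)
  qed
  also have "\<dots> \<le> (\<Sum>l'<L. Lp \<omega> (V l') {1..<K})" by (rule Lp_sum) auto
  also have "\<dots> \<le> (\<Sum>l'<L. (1/4)^(max l l'))"
  proof (rule sum_mono)
    fix l' assume "l' \<in> {..<L}"
    have "Lp \<omega> (V l') {1..<K} \<le> tau (z l') (Wf (max l l'))"
      unfolding V_def by (rule KS) (use z_props sep in auto)
    also have "\<dots> \<le> (1/4)^(max l l')" by (rule Mt) (auto simp: Mt_Wf)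
    finally show "Lp \<omega> (V l') {1..<K} \<le> (1/4)^(max l l')" .
  qed
  also have "\<dots> \<le> 2 * (1/2)^l" by (rule sumq)
  finally show ?thesis .
qed

lemma cc0: "cc 0 = 0" by (simp add: cc_def)

lemma cc_Lp: "Lp \<omega> cc {1..<K} \<le> 2"
proof -
  have "Lp \<omega> (\<lambda>t. Tn 0 cc t - w 0 t) {1..<K} \<le> 2 * (1/2)^0"
  proof (rule Err)
    fix l' k assume "k \<in> Gs 0 l'"
    hence kA: "k \<in> S.A l'" by (simp add: Gs_def)
    have "Wf (max 0 l') \<le> Wf (Suc l')" by (rule Wf_mono) simp
    also have "\<dots> \<le> S.D l'" by (rule S.D_geW)
    also have "\<dots> \<le> k" by (rule S.A_ge[OF kA])
    finally show "Wf (max 0 l') \<le> k" .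
  qed simp
  thus ?thesis by (simp add: w0)
qed

lemma cc_wsum: "wsum \<omega> cc" and cc_norm: "sqrt (wn \<omega> cc) \<le> 2"
  using wsum_from_Lp[OF cc0 cc_Lp] by auto

lemma cc_supp3: "supp3 cc"
proof -
  have "cc t = 0" if "t < 3" for t
  proof -
    have "sh n (w n) t = 0" for n
    proof (rule ccontr)
      assume "sh n (w n) t \<noteq> 0"
      hence "3 * 2^n \<le> t" by (rule sh_supp3[OF w_props(2)])
      moreover have "3 \<le> 3 * (2::nat)^n" by simp
      ultimately show False using that by linarith
    qed
    thus ?thesis by (simp add: cc_def)
  qed
  thus ?thesis by (simp add: supp3_def)
qed

lemma cc_bound: "cmod (cc t) \<le> real t * real t"
proof -
  have "cmod (cc t) \<le> (\<Sum>n<t. cmod (sh n (w n) t))" unfolding cc_def by (rule norm_sum)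
  also have "\<dots> \<le> (\<Sum>n<t. real t)"
  proof (rule sum_mono)
    fix n assume "n \<in> {..<t}"
    have "cmod (sh n (w n) t) \<le> real n" using w_bound by (simp add: sh_def)
    thus "cmod (sh n (w n) t) \<le> real t" using \<open>n \<in> {..<t}\<close> by simp
  qed
  also have "\<dots> = real t * real t" by simp
  finally show ?thesis .
qed

lemma orbit_close:
  assumes mA: "m \<in> S.A l"
  shows "Lp \<omega> (\<lambda>t. Tn m cc t - z l t) {1..<K} \<le> 2 * (1/2)^l"
proof -
  have "Lp \<omega> (\<lambda>t. Tn m cc t - w m t) {1..<K} \<le> 2 * (1/2)^l"
  proof (rule Err)
    fix n assume nm: "n < m"
    show "Tn (m-n) (w n) = (\<lambda>_. 0)"
    proof (cases "\<exists>l'. n \<in> S.A l'")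
      case True
      then obtain l' where nA: "n \<in> S.A l'" by blast
      have "int (Wf (max l' l)) \<le> \<bar>int n - int m\<bar>" using S.A_sep[OF nA mA] nm by simp
      hence "Wf (max l' l) \<le> m - n" using nm by linarith
      moreover have "Kt l' \<le> Wf (max l' l)" using Kt_Wf[of l'] Wf_mono[of l' "max l' l"] by simp
      ultimately have "Kt l' \<le> m - n" by simp
      thus ?thesis using Kt w_A[OF nA] by simp
    next
      case False thus ?thesis by (simp add: w_def Tn_zero')
    qed
  next
    fix l' k assume "k \<in> Gs m l'"
    hence k: "1 \<le> k" "m + k \<in> S.A l'" by (auto simp: Gs_def)
    have "int (Wf (max l l')) \<le> \<bar>int m - int (m + k)\<bar>" using S.A_sep[OF mA k(2)] k(1) by simp
    thus "Wf (max l l') \<le> k" by simp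
  qed
  thus ?thesis using w_A[OF mA] by simp
qed

end


lemma coef_eq_fact: "coef f n = (deriv ^^ n) f 0 / fact n"
  by (simp add: coef_def)

lemma PS:
  assumes s: "\<forall>z\<in>ball 0 1. summable (\<lambda>n. a n * z^n)"
  shows "(\<lambda>z. \<Sum>n. a n * z^n) holomorphic_on ball 0 1" "coef (\<lambda>z. \<Sum>n. a n * z^n) = a"
proof -
  define F where "F = Abs_fps a"
  have R0: "summable (\<lambda>n. fps_nth (Abs_fps a) n * complex_of_real r ^ n)" if "0 < r" "ereal r < 1" for r
  proof -
    have "complex_of_real r \<in> ball 0 1" using that by simp
    thus ?thesis using s by simp
  qed
  have R: "fps_conv_radius F \<ge> 1" unfolding fps_conv_radius_def F_def
    apply (rule conv_radius_geI_ex')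
    using R0 by auto
  have ev: "eval_fps F = (\<lambda>z. \<Sum>n. a n * z^n)" by (simp add: eval_fps_def F_def fun_eq_iff)
  have sub: "ball (0::complex) 1 \<subseteq> eball 0 (fps_conv_radius F)"
  proof
    fix z :: complex assume "z \<in> ball 0 1"
    hence "ereal (norm z) < 1" by simp
    also have "\<dots> \<le> fps_conv_radius F" by (rule R)
    finally show "z \<in> eball 0 (fps_conv_radius F)" by simp
  qed
  show "(\<lambda>z. \<Sum>n. a n * z^n) holomorphic_on ball 0 1"
    using holomorphic_on_eval_fps[OF sub] ev by simp
  have "(0::ereal) < 1" by simp
  hence pos: "fps_conv_radius F > 0" using R by (rule less_le_trans)
  have exp: "eval_fps F has_fps_expansion F" by (rule eval_fps_has_fps_expansion[OF pos])
  show "coef (\<lambda>z. \<Sum>n. a n * z^n) = a"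
  proof
    fix n
    have "fps_nth F n = (deriv ^^ n) (eval_fps F) 0 / fact n" by (rule fps_nth_fps_expansion[OF exp])
    hence "coef (eval_fps F) n = a n" by (simp add: coef_eq_fact F_def)
    thus "coef (\<lambda>z. \<Sum>n. a n * z^n) n = a n" using ev by simp
  qed
qed

lemma coef_sums:
  assumes "f holomorphic_on ball 0 1" "z \<in> ball 0 1"
  shows "(\<lambda>n. coef f n * z^n) sums f z"
  using holomorphic_power_series[OF assms] by (simp add: coef_eq_fact)

lemma Tcoef_bound: "cmod (Tcoef a m) \<le> cmod (a (2*m)) + cmod (a ((2*m - 1) div 3))"
proof (cases "m < 3")
  case True thus ?thesis by (simp add: Tcoef_P1)
next
  case False
  have "cmod (Tcoef a m) \<le> (\<Sum>j\<in>P1 m. cmod (a j))" by (simp add: Tcoef_P1 False norm_sum)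
  also have "\<dots> \<le> (\<Sum>j\<in>{2*m, (2*m - 1) div 3}. cmod (a j))" by (rule sum_mono2) (use P1_sub in auto)
  also have "\<dots> \<le> cmod (a (2*m)) + cmod (a ((2*m - 1) div 3))"
  proof -
    have "(2*m - 1) div 3 \<le> 2*m - 1" by simp
    hence ne: "2*m \<noteq> (2*m - 1) div 3" using False by linarith
    thus ?thesis by simp
  qed
  finally show ?thesis .
qed

lemma Top_summable:
  assumes hol: "f holomorphic_on ball 0 1" and z: "z \<in> ball 0 1"
  shows "summable (\<lambda>m. Tcoef (coef f) m * z^m)"
proof -
  define a where "a = coef f"
  define \<rho> where "\<rho> = sqrt ((1 + norm z) / 2)"
  have nz: "norm z < 1" using z by simp
  have \<rho>0: "0 < \<rho>" by (simp add: \<rho>_def add_pos_nonneg)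
  have \<rho>2: "\<rho>^2 = (1 + norm z) / 2" by (simp add: \<rho>_def add_nonneg_nonneg)
  have "sqrt ((1 + norm z) / 2) < sqrt 1" using nz by (intro real_sqrt_less_mono) simp
  hence \<rho>1: "\<rho> < 1" by (simp add: \<rho>_def)
  have zr: "norm z < \<rho>^2" using \<rho>2 nz by simp
  have "complex_of_real \<rho> \<in> ball 0 1" using \<rho>0 \<rho>1 by simp
  hence "summable (\<lambda>n. a n * complex_of_real \<rho> ^ n)"
    using coef_sums[OF hol] sums_summable unfolding a_def by blast
  hence "Bseq (\<lambda>n. a n * complex_of_real \<rho> ^ n)"
    by (intro convergent_imp_Bseq) (auto dest: summable_LIMSEQ_zero simp: convergent_def)
  then obtain B where B0: "0 < B" and B: "\<forall>n. norm (a n * complex_of_real \<rho> ^ n) \<le> B" by (rule BseqE)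
  have aB: "cmod (a j) \<le> B / \<rho>^j" for j
  proof -
    have "cmod (a j) * \<rho>^j \<le> B" using B[rule_format, of j] \<rho>0 by (simp add: norm_mult norm_power)
    thus ?thesis using \<rho>0 by (simp add: field_simps)
  qed
  have aB2: "cmod (a j) \<le> B / \<rho>^(2*m)" if "j \<le> 2*m" for j m
  proof -
    have "\<rho>^(2*m) \<le> \<rho>^j" using that \<rho>0 \<rho>1 by (intro power_decreasing) auto
    hence "B / \<rho>^j \<le> B / \<rho>^(2*m)" using B0 \<rho>0 by (intro divide_left_mono) auto
    thus ?thesis using aB[of j] by linarith
  qed
  define q where "q = norm z / \<rho>^2"
  have q0: "0 \<le> q" and q1: "q < 1" using zr \<rho>0 by (auto simp: q_def)
  show ?thesis
  proof (rule summable_comparison_test)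
    show "\<exists>N. \<forall>n\<ge>N. norm (Tcoef (coef f) n * z^n) \<le> 2 * B * q^n"
    proof (intro exI allI impI)
      fix m :: nat
      have "norm (Tcoef a m * z^m) = cmod (Tcoef a m) * norm z ^ m" by (simp add: norm_mult norm_power)
      also have "\<dots> \<le> (B / \<rho>^(2*m) + B / \<rho>^(2*m)) * norm z ^ m"
        by (intro mult_right_mono order_trans[OF Tcoef_bound] add_mono aB2) auto
      also have "\<dots> = 2 * B * q^m"
      proof -
        have "(\<rho>^2)^m = \<rho>^(2*m)" by (simp add: power_mult)
        thus ?thesis using \<rho>0 by (simp add: q_def power_divide field_simps)
      qed
      finally show "norm (Tcoef (coef f) m * z^m) \<le> 2 * B * q^m" by (simp add: a_def)
    qed
    show "summable (\<lambda>n. 2 * B * q^n)" using q0 q1 by (intro summable_mult summable_geometric) simp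
  qed
qed

lemma Top_coef:
  assumes hol: "f holomorphic_on ball 0 1"
  shows "Top f holomorphic_on ball 0 1" "coef (Top f) = Tcoef (coef f)"
proof -
  have s: "\<forall>z\<in>ball 0 1. summable (\<lambda>m. Tcoef (coef f) m * z^m)" using Top_summable[OF hol] by blast
  have eq: "Top f = (\<lambda>z. \<Sum>m. Tcoef (coef f) m * z^m)" by (simp add: Top_def fun_eq_iff)
  show "Top f holomorphic_on ball 0 1" using PS(1)[OF s] eq by simp
  show "coef (Top f) = Tcoef (coef f)" using PS(2)[OF s] eq by simp
qed

lemma sq_conv: "conv_radius (\<lambda>n. (real n + 1)^2) = 1"
proof (rule conv_radius_ratio_limit_nonzero[of 1 1])
  show "(\<lambda>n. norm ((real n + 1)^2) / norm ((real (Suc n) + 1)^2)) \<longlonglongrightarrow> 1"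
  proof -
    have "(\<lambda>n. (real n + 1)^2 / (real n + 2)^2) \<longlonglongrightarrow> 1" by real_asymp
    thus ?thesis by (simp add: add.commute)
  qed
qed auto

lemma sq_summable: "0 \<le> r \<Longrightarrow> r < 1 \<Longrightarrow> summable (\<lambda>n. (real n + 1)^2 * r^n)"
  using summable_in_conv_radius[of r "\<lambda>n. (real n + 1)^2"] sq_conv by simp

lemma poly_coef_summable:
  assumes b: "\<And>t. cmod (c t) \<le> real t * real t" and z: "z \<in> ball 0 1"
  shows "summable (\<lambda>t. c t * z^t)"
proof (rule summable_comparison_test)
  show "\<exists>N. \<forall>n\<ge>N. norm (c n * z^n) \<le> (real n + 1)^2 * norm z ^ n"
  proof (intro exI allI impI)
    fix n :: nat
    have "norm (c n * z^n) = cmod (c n) * norm z ^ n" by (simp add: norm_mult norm_power)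
    also have "\<dots> \<le> (real n + 1)^2 * norm z ^ n"
      by (intro mult_right_mono order_trans[OF b]) (auto simp: power2_eq_square intro!: mult_mono)
    finally show "norm (c n * z^n) \<le> (real n + 1)^2 * norm z ^ n" .
  qed
  show "summable (\<lambda>n. (real n + 1)^2 * norm z ^ n)" using z by (intro sq_summable) auto
qed


context MAIN begin

definition fvec :: "complex \<Rightarrow> complex" where "fvec = (\<lambda>z. \<Sum>n. cc n * z^n)"

lemma fvec: "fvec holomorphic_on ball 0 1" "coef fvec = cc"
proof -
  have s: "\<forall>z\<in>ball 0 1. summable (\<lambda>n. cc n * z^n)" using poly_coef_summable[OF cc_bound] by blast
  show "fvec holomorphic_on ball 0 1" "coef fvec = cc" using PS[OF s] by (simp_all add: fvec_def)
qed

lemma fvec_inX: "inX \<omega> fvec"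
  using fvec cc_wsum cc_supp3 by (simp add: inX_def wsum_def supp3_def)

end

locale MAINB = MAIN +
  assumes tb: "Top_bounded \<omega>"
begin

lemma iter: "inX \<omega> ((Top ^^ m) fvec) \<and> coef ((Top ^^ m) fvec) = Tn m cc"
proof (induction m)
  case 0 thus ?case using fvec fvec_inX by simp
next
  case (Suc m)
  have i: "inX \<omega> ((Top ^^ m) fvec)" using Suc by simp
  have "inX \<omega> (Top ((Top ^^ m) fvec))" using tb i by (auto simp: Top_bounded_def)
  moreover have "coef (Top ((Top ^^ m) fvec)) = Tcoef (coef ((Top ^^ m) fvec))"
    using Top_coef(2) i by (simp add: inX_def)
  ultimately show ?case using Suc by simp
qed

lemma coef_diff:
  assumes "f holomorphic_on ball 0 1" "g holomorphic_on ball 0 1"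
  shows "coef (\<lambda>z. f z - g z) n = coef f n - coef g n"
  using higher_deriv_diff[OF assms, of 0 n] by (simp add: coef_def diff_divide_distrib)

lemma main: "freq_hypercyclic \<omega>"
  unfolding freq_hypercyclic_def
proof (intro exI conjI allI impI)
  show "inX \<omega> fvec" by (rule fvec_inX)
  fix U assume UU: "openX \<omega> U \<and> U \<noteq> {}"
  then obtain u where uU: "u \<in> U" by blast
  have uX: "inX \<omega> u" using UU uU by (simp add: openX_def)
  obtain e where e: "0 < e" and eU: "\<forall>g. inX \<omega> g \<and> normX \<omega> (\<lambda>z. g z - u z) < e \<longrightarrow> g \<in> U"
    using UU uU unfolding openX_def by blast
  define a where "a = coef u"
  have a3: "supp3 a" and aw: "wsum \<omega> a" using uX by (auto simp: inX_def a_def supp3_def wsum_def)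
  obtain cd B where B: "B < e/2" and cdB: "\<forall>K. Lp \<omega> (\<lambda>i. Phi cd i - a i) {1..<K} \<le> B"
    using density[OF a3 aw, of "e/2"] e by auto
  have yc: "ycode (to_nat cd) = Phi cd" by (simp add: ycode_def)
  obtain L0 where L0: "(1/2::real)^L0 < e/4" using real_arch_pow_inv[of "e/4" "1/2"] e by auto
  obtain l where lL: "l \<ge> L0" and zl: "z l = Phi cd" using z_often[of L0 "to_nat cd"] yc by auto
  have hl: "2 * (1/2::real)^l < e/2"
  proof -
    have "(1/2::real)^l \<le> (1/2)^L0" using lL by (intro power_decreasing) auto
    thus ?thesis using L0 by linarith
  qed
  have inU: "(Top ^^ m) fvec \<in> U" if mA: "m \<in> S.A l" for m
  proof -
    define g where "g = (Top ^^ m) fvec"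
    have gX: "inX \<omega> g" and gc: "coef g = Tn m cc" using iter[of m] by (auto simp: g_def)
    have cd: "coef (\<lambda>z. g z - u z) = (\<lambda>i. Tn m cc i - a i)"
      using coef_diff[of g u] gX uX gc by (auto simp: inX_def a_def fun_eq_iff)
    have d0: "Tn m cc 0 - a 0 = 0" using gX uX gc by (auto simp: inX_def a_def dest: fun_cong[of _ _ 0])
    have bd: "Lp \<omega> (\<lambda>i. Tn m cc i - a i) {1..<K} \<le> 2 * (1/2)^l + B" for K
    proof -
      have "Lp \<omega> (\<lambda>i. Tn m cc i - a i) {1..<K} \<le> Lp \<omega> (\<lambda>i. Tn m cc i - z l i) {1..<K} + Lp \<omega> (\<lambda>i. z l i - a i) {1..<K}"
        by (rule Lp_tri) auto
      also have "\<dots> \<le> 2 * (1/2)^l + B" using orbit_close[OF mA, of K] cdB zl by (intro add_mono) auto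
      finally show ?thesis .
    qed
    have "sqrt (wn \<omega> (\<lambda>i. Tn m cc i - a i)) \<le> 2 * (1/2)^l + B" using wsum_from_Lp(2)[OF d0 bd] .
    hence "normX \<omega> (\<lambda>z. g z - u z) < e" using hl B by (simp add: normX_def cd wn_def)
    thus ?thesis using eU gX by (simp add: g_def)
  qed
  define c where "c = 1 / (8 * real (S.D (Suc l)))"
  have c0: "0 < c" by (simp add: c_def)
  have "eventually (\<lambda>N. ereal c \<le> ereal (real (card {n. n \<le> N \<and> (Top ^^ n) fvec \<in> U}) / real (N + 1))) sequentially"
    unfolding eventually_sequentially
  proof (intro exI allI impI)
    fix N assume N: "S.D (Suc l) \<le> N"
    have "real (N+1) / (8 * real (S.D (Suc l))) \<le> real (card {n. n \<le> N \<and> n \<in> S.A l})" by (rule S.A_density[OF N])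
    also have "\<dots> \<le> real (card {n. n \<le> N \<and> (Top ^^ n) fvec \<in> U})"
      by (intro of_nat_mono card_mono) (auto intro: inU)
    finally have "real (N+1) * c \<le> real (card {n. n \<le> N \<and> (Top ^^ n) fvec \<in> U})" by (simp add: c_def)
    hence "c \<le> real (card {n. n \<le> N \<and> (Top ^^ n) fvec \<in> U}) / real (N + 1)"
      by (simp add: field_simps)
    thus "ereal c \<le> ereal (real (card {n. n \<le> N \<and> (Top ^^ n) fvec \<in> U}) / real (N + 1))" by simp
  qed
  hence "ereal c \<le> Liminf sequentially (\<lambda>N. ereal (real (card {n. n \<le> N \<and> (Top ^^ n) fvec \<in> U}) / real (N + 1)))"
    by (rule Liminf_bounded)
  moreover have "0 < ereal c" using c0 by simp
  ultimately show "Liminf sequentially (\<lambda>N. ereal (real (card {n. n \<le> N \<and> (Top ^^ n) fvec \<in> U}) / real (N + 1))) > 0"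
    by (rule less_le_trans[rotated])
qed

end


lemma w0_pos: "0 < \<omega>0 n" by (simp add: \<omega>0_def)

interpretation W0: W \<omega>0 by unfold_locales (rule w0_pos)

lemma P1_disj: "m \<noteq> m' \<Longrightarrow> P1 m \<inter> P1 m' = {}" by (auto simp: P1_def)

lemma card_P1: "card (P1 m) \<le> 2"
proof -
  have "card (P1 m) \<le> card {2*m, (2*m - 1) div 3}" by (rule card_mono) (simp, rule P1_sub)
  also have "\<dots> \<le> 2" by (simp add: card_insert_if)
  finally show ?thesis .
qed

lemma w0_P1: "j \<in> P1 m \<Longrightarrow> \<omega>0 j \<le> 2 * \<omega>0 m"
proof -
  assume "j \<in> P1 m"
  hence "j \<le> 2*m" by (rule P1_le)
  hence "real j + 1 \<le> 2 * (real m + 1)" by simp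
  thus ?thesis by (simp add: \<omega>0_def divide_right_mono)
qed

lemma Tcoef_term_bound:
  "(cmod (Tcoef a m))\<^sup>2 / \<omega>0 m \<le> 4 * (\<Sum>j\<in>P1 m. (cmod (a j))\<^sup>2 / \<omega>0 j)"
proof (cases "m < 3")
  case True thus ?thesis by (simp add: Tcoef_P1 sum_nonneg w0_pos less_imp_le)
next
  case False
  have "cmod (Tcoef a m) \<le> (\<Sum>j\<in>P1 m. cmod (a j))" by (simp add: Tcoef_P1 False norm_sum)
  hence "(cmod (Tcoef a m))\<^sup>2 \<le> (\<Sum>j\<in>P1 m. cmod (a j))\<^sup>2" by (intro power_mono) auto
  also have "\<dots> \<le> (\<Sum>j\<in>P1 m. (cmod (a j))\<^sup>2) * card (P1 m)" by (rule sum_squared_le_sum_of_squares)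
  also have "\<dots> \<le> (\<Sum>j\<in>P1 m. (cmod (a j))\<^sup>2) * 2"
    using card_P1[of m] by (intro mult_left_mono) (auto simp: sum_nonneg)
  finally have h: "(cmod (Tcoef a m))\<^sup>2 / \<omega>0 m \<le> 2 * (\<Sum>j\<in>P1 m. (cmod (a j))\<^sup>2 / \<omega>0 m)"
    using w0_pos[of m] by (simp add: divide_right_mono sum_divide_distrib[symmetric] mult.commute)
  have "(\<Sum>j\<in>P1 m. (cmod (a j))\<^sup>2 / \<omega>0 m) \<le> (\<Sum>j\<in>P1 m. 2 * ((cmod (a j))\<^sup>2 / \<omega>0 j))"
  proof (rule sum_mono)
    fix j assume j: "j \<in> P1 m"
    have "1 / \<omega>0 m \<le> 2 / \<omega>0 j"
      using w0_P1[OF j] w0_pos[of j] w0_pos[of m] by (simp add: divide_simps)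
    hence "(cmod (a j))\<^sup>2 * (1 / \<omega>0 m) \<le> (cmod (a j))\<^sup>2 * (2 / \<omega>0 j)" by (intro mult_left_mono) auto
    moreover have "(cmod (a j))\<^sup>2 / \<omega>0 m = (cmod (a j))\<^sup>2 * (1 / \<omega>0 m)" by simp
    moreover have "2 * ((cmod (a j))\<^sup>2 / \<omega>0 j) = (cmod (a j))\<^sup>2 * (2 / \<omega>0 j)" by simp
    ultimately show "(cmod (a j))\<^sup>2 / \<omega>0 m \<le> 2 * ((cmod (a j))\<^sup>2 / \<omega>0 j)" by linarith
  qed
  also have "\<dots> = 2 * (\<Sum>j\<in>P1 m. (cmod (a j))\<^sup>2 / \<omega>0 j)" by (simp add: sum_distrib_left)
  finally show ?thesis using h by linarith
qed

lemma Top_bounded_w0: "Top_bounded \<omega>0"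
  unfolding Top_bounded_def
proof (intro exI allI impI conjI)
  fix f assume fX: "inX \<omega>0 f"
  define a where "a = coef f"
  have hol: "f holomorphic_on ball 0 1" using fX by (simp add: inX_def)
  have a0: "a 0 = 0" using fX by (simp add: inX_def a_def)
  have aw: "wsum \<omega>0 a" using fX by (simp add: inX_def a_def wsum_def)
  define g where "g = (\<lambda>i. (cmod (a i))\<^sup>2 / \<omega>0 i)"
  have g0: "0 \<le> g i" for i by (simp add: g_def w0_pos less_imp_le)
  have sg: "summable g" using aw by (simp add: wsum_def g_def)
  have ct: "coef (Top f) = Tcoef a" using Top_coef(2)[OF hol] by (simp add: a_def)
  have bd: "Lp \<omega>0 (Tcoef a) {1..<K} \<le> 2 * sqrt (wn \<omega>0 a)" for K
  proof -
    have "(Lp \<omega>0 (Tcoef a) {1..<K})\<^sup>2 = (\<Sum>m\<in>{1..<K}. (cmod (Tcoef a m))\<^sup>2 / \<omega>0 m)" by (rule W0.Lp_sq) auto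
    also have "\<dots> \<le> (\<Sum>m\<in>{1..<K}. 4 * (\<Sum>j\<in>P1 m. g j))"
      by (rule sum_mono) (simp add: g_def Tcoef_term_bound)
    also have "\<dots> = 4 * (\<Sum>j\<in>(\<Union>m\<in>{1..<K}. P1 m). g j)"
      by (simp add: sum_distrib_left[symmetric] sum.UNION_disjoint P1_finite P1_disj)
    also have "\<dots> \<le> 4 * wn \<omega>0 a"
    proof -
      have "(\<Sum>j\<in>(\<Union>m\<in>{1..<K}. P1 m). g j) \<le> suminf g"
        by (rule sum_le_suminf[OF sg]) (auto simp: P1_finite g0)
      thus ?thesis by (simp add: wn_def g_def)
    qed
    also have "\<dots> = (2 * sqrt (wn \<omega>0 a))\<^sup>2"
      using suminf_nonneg[OF sg g0] by (simp add: power_mult_distrib wn_def g_def)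
    finally show ?thesis by (rule power2_le_imp_le) (simp add: wn_def g_def[symmetric] suminf_nonneg[OF sg g0])
  qed
  have b0: "Tcoef a 0 = 0" by (simp add: Tcoef_P1)
  have sw: "wsum \<omega>0 (Tcoef a)" and nb: "sqrt (wn \<omega>0 (Tcoef a)) \<le> 2 * sqrt (wn \<omega>0 a)"
    using W0.wsum_from_Lp[OF b0 bd] by auto
  show "inX \<omega>0 (Top f)"
    using Top_coef(1)[OF hol] ct sw by (simp add: inX_def wsum_def Tcoef_P1)
  show "normX \<omega>0 (Top f) \<le> 2 * normX \<omega>0 f"
    using nb ct by (simp add: normX_def wn_def a_def)
qed

theorem theorem3p16:
  shows "(\<forall>\<omega> :: nat \<Rightarrow> real.
            (\<forall>n\<ge>1. \<omega> n > 0) \<and>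
            (\<exists>\<delta>>0. \<forall>n\<ge>1. \<omega> n \<ge> \<delta>) \<and>
            (\<forall>k\<ge>3. summable (\<lambda>n. 1 / \<omega> (k * 2 ^ n))) \<and>
            Top_bounded \<omega>
          \<longrightarrow> freq_hypercyclic \<omega>)
         \<and> freq_hypercyclic \<omega>0"
proof -
  have gen: "freq_hypercyclic \<omega>" if h: "(\<forall>n\<ge>1. \<omega> n > 0) \<and>
            (\<exists>\<delta>>0. \<forall>n\<ge>1. \<omega> n \<ge> \<delta>) \<and>
            (\<forall>k\<ge>3. summable (\<lambda>n. 1 / \<omega> (k * 2 ^ n))) \<and>
            Top_bounded \<omega>" for \<omega>
  proof -
    obtain \<delta> where d: "\<delta> > 0" "\<forall>n\<ge>1. \<omega> n \<ge> \<delta>" using h by blast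
    interpret MAINB \<omega> \<delta>
      by unfold_locales (use h d in auto)
    show ?thesis by (rule main)
  qed
  have "freq_hypercyclic \<omega>0"
  proof (rule gen, intro conjI)
    show "\<forall>n\<ge>1. \<omega>0 n > 0" by (simp add: w0_pos)
    show "\<exists>\<delta>>0. \<forall>n\<ge>1. \<omega>0 n \<ge> \<delta>"
      by (intro exI[of _ "1/pi"]) (auto simp: \<omega>0_def divide_right_mono)
    show "\<forall>k\<ge>3. summable (\<lambda>n. 1 / \<omega>0 (k * 2 ^ n))"
    proof (intro allI impI)
      fix k :: nat assume k: "3 \<le> k"
      show "summable (\<lambda>n. 1 / \<omega>0 (k * 2 ^ n))"
      proof (rule summable_comparison_test)
        show "\<exists>N. \<forall>n\<ge>N. norm (1 / \<omega>0 (k * 2 ^ n)) \<le> pi * (1/2)^n"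
        proof (intro exI allI impI)
          fix n :: nat
          have "1 * (2::real)^n \<le> real k * 2^n" by (rule mult_right_mono) (use k in auto)
          hence "(2::real)^n \<le> real k * 2^n + 1" by linarith
          hence "(2::real)^n \<le> real (k * 2^n) + 1" by simp
          moreover have "0 < (real (k * 2^n) + 1) * 2^n" by (intro mult_pos_pos add_nonneg_pos) auto
          ultimately have "1 / (real (k * 2^n) + 1) \<le> 1 / 2^n" by (intro divide_left_mono) auto
          hence "pi * (1 / (real (k * 2^n) + 1)) \<le> pi * (1 / 2^n)" by (intro mult_left_mono) auto
          thus "norm (1 / \<omega>0 (k * 2 ^ n)) \<le> pi * (1/2)^n"
            by (simp add: \<omega>0_def power_one_over)
        qed
        show "summable (\<lambda>n. pi * (1/2::real)^n)" by (intro summable_mult summable_geometric) simp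
      qed
    qed
    show "Top_bounded \<omega>0" by (rule Top_bounded_w0)
  qed
  thus ?thesis using gen by blast
qed


end
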